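(* Let $A,B$ be tridendriform algebras over a field $\mathbb{K}$, with augmentations $\overline{A}=\mathbb{K}1\oplus A$ and $\overline{B}=\mathbb{K}1\oplus B$. Let $$A\overline{\otimes}B:=(A\otimes B)\oplus(\mathbb{K}1\otimes B)\oplus(A\otimes\mathbb{K}1)\subseteq\overline{A}\otimes\overline{B}.$$ For $\ltimes\in\{\prec,\cdot,\succ\}$ define bilinear products on $A\overline{\otimes}B$ on elements $a\otimes b$, $c\otimes d$ (with $a,c\in\overline A$, $b,d\in\overline B$, each of $a\otimes b$, $c\otimes d$ lying in one of the three summands) by: - if $b=d=1$ (so that $a,c\in A$): $(a\otimes 1)\ltimes(c\otimes 1)=(a\ltimes c)\otimes 1$; - otherwise: $(a\otimes b)\ltimes(c\otimes d)=(a*c)\otimes(b\ltimes d)$, computed with the augmented conventions in $\overline{A}$ and $\overline{B}$. Then $(A\overline{\otimes}B,\prec,\cdot,\succ)$ is a tridendriform algebra.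
   Context: A tridendriform algebra over $\mathbb{K}$ is a vector space $A$ with three bilinear products $\prec,\cdot,\succ$ such that, writing $a*b=a\prec b+a\cdot b+a\succ b$, for all $a,b,c\in A$: $(a\prec b)\prec c=a\prec(b*c)$, $(a\succ b)\prec c=a\succ(b\prec c)$, $(a*b)\succ c=a\succ(b\succ c)$, $(a\succ b)\cdot c=a\succ(b\cdot c)$, $(a\prec b)\cdot c=a\cdot(b\succ c)$, $(a\cdot b)\prec c=a\cdot(b\prec c)$, $(a\cdot b)\cdot c=a\cdot(b\cdot c)$. The augmentation of a tridendriform algebra $A$ is $\overline{A}=\mathbb{K}1\oplus A$, where $1$ is a formally adjoined unit for $*$ ($1*x=x*1=x$ for all $x\in\overline A$), and for all $a\in A$: $1\prec a=0$, $a\prec 1=a$, $1\succ a=a$, $a\succ 1=0$, $1\cdot a=a\cdot 1=0$. The products $1\prec 1$, $1\cdot 1$, $1\succ 1$ are not defined. *)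

theory Defs
  imports Complex_Main "HOL-Library.Function_Algebras"
begin

definition bilinear_on ::
  "'v set \<Rightarrow> ('v \<Rightarrow> 'v \<Rightarrow> 'v) \<Rightarrow> ('k \<Rightarrow> 'v \<Rightarrow> 'v) \<Rightarrow> ('v \<Rightarrow> 'v \<Rightarrow> 'v) \<Rightarrow> bool" where
  "bilinear_on S add scale f \<longleftrightarrow>
     (\<forall>x\<in>S. \<forall>y\<in>S. f x y \<in> S) \<and>
     (\<forall>x\<in>S. \<forall>y\<in>S. \<forall>z\<in>S. f (add x y) z = add (f x z) (f y z) \<and> f x (add y z) = add (f x y) (f x z)) \<and>
     (\<forall>s. \<forall>x\<in>S. \<forall>y\<in>S. f (scale s x) y = scale s (f x y) \<and> f x (scale s y) = scale s (f x y))"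

definition tridend_axioms_on ::
  "'v set \<Rightarrow> ('v \<Rightarrow> 'v \<Rightarrow> 'v) \<Rightarrow> ('v \<Rightarrow> 'v \<Rightarrow> 'v) \<Rightarrow> ('v \<Rightarrow> 'v \<Rightarrow> 'v) \<Rightarrow> ('v \<Rightarrow> 'v \<Rightarrow> 'v) \<Rightarrow> bool" where
  "tridend_axioms_on S add prec dot succ \<longleftrightarrow>
     (let star = (\<lambda>a b. add (add (prec a b) (dot a b)) (succ a b)) in
      \<forall>a\<in>S. \<forall>b\<in>S. \<forall>c\<in>S.
        prec (prec a b) c = prec a (star b c) \<and>
        prec (succ a b) c = succ a (prec b c) \<and>
        succ (star a b) c = succ a (succ b c) \<and>
        dot (succ a b) c = succ a (dot b c) \<and>
        dot (prec a b) c = dot a (succ b c) \<and>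
        prec (dot a b) c = dot a (prec b c) \<and>
        dot (dot a b) c = dot a (dot b c))"

definition tridendriform_on ::
  "'v set \<Rightarrow> ('v \<Rightarrow> 'v \<Rightarrow> 'v) \<Rightarrow> ('k \<Rightarrow> 'v \<Rightarrow> 'v) \<Rightarrow>
   ('v \<Rightarrow> 'v \<Rightarrow> 'v) \<Rightarrow> ('v \<Rightarrow> 'v \<Rightarrow> 'v) \<Rightarrow> ('v \<Rightarrow> 'v \<Rightarrow> 'v) \<Rightarrow> bool" where
  "tridendriform_on S add scale prec dot succ \<longleftrightarrow>
     bilinear_on S add scale prec \<and> bilinear_on S add scale dot \<and> bilinear_on S add scale succ \<and>
     tridend_axioms_on S add prec dot succ"

section \<open>Augmentation  K1 \<oplus> A, represented as pairs (lambda, a)\<close>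

definition aug_add :: "'k::field \<times> 'a::ab_group_add \<Rightarrow> 'k \<times> 'a \<Rightarrow> 'k \<times> 'a" where
  "aug_add u v = (fst u + fst v, snd u + snd v)"

definition aug_scale :: "('k::field \<Rightarrow> 'a::ab_group_add \<Rightarrow> 'a) \<Rightarrow> 'k \<Rightarrow> 'k \<times> 'a \<Rightarrow> 'k \<times> 'a" where
  "aug_scale scale s u = (s * fst u, scale s (snd u))"

text \<open>Elements of {1} \<union> A are encoded as 'a option: None is the unit 1, Some a is a \<in> A.\<close>
definition aug_emb :: "'a::ab_group_add option \<Rightarrow> 'k::field \<times> 'a" where
  "aug_emb x = (case x of None \<Rightarrow> (1, 0) | Some a \<Rightarrow> (0, a))"

text \<open>The augmented associative product * (1 is a unit) on {1} \<union> A, with values in K1 \<oplus> A.\<close>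
definition aug_star ::
  "('a \<Rightarrow> 'a \<Rightarrow> 'a) \<Rightarrow> ('a \<Rightarrow> 'a \<Rightarrow> 'a) \<Rightarrow> ('a \<Rightarrow> 'a \<Rightarrow> 'a) \<Rightarrow>
   'a::ab_group_add option \<Rightarrow> 'a option \<Rightarrow> 'k::field \<times> 'a" where
  "aug_star prec dot succ x y = (case (x, y) of
      (None, None) \<Rightarrow> (1, 0)
    | (None, Some c) \<Rightarrow> (0, c)
    | (Some a, None) \<Rightarrow> (0, a)
    | (Some a, Some c) \<Rightarrow> (0, prec a c + dot a c + succ a c))"

text \<open>Augmented products; the values at (1,1) are not defined (undefined, never used).\<close>
definition aug_prec :: "('a \<Rightarrow> 'a \<Rightarrow> 'a) \<Rightarrow> 'a::ab_group_add option \<Rightarrow> 'a option \<Rightarrow> 'k::field \<times> 'a" where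
  "aug_prec prec x y = (case (x, y) of
      (None, None) \<Rightarrow> undefined
    | (None, Some c) \<Rightarrow> (0, 0)
    | (Some a, None) \<Rightarrow> (0, a)
    | (Some a, Some c) \<Rightarrow> (0, prec a c))"

definition aug_dot :: "('a \<Rightarrow> 'a \<Rightarrow> 'a) \<Rightarrow> 'a::ab_group_add option \<Rightarrow> 'a option \<Rightarrow> 'k::field \<times> 'a" where
  "aug_dot dot x y = (case (x, y) of
      (None, None) \<Rightarrow> undefined
    | (None, Some c) \<Rightarrow> (0, 0)
    | (Some a, None) \<Rightarrow> (0, 0)
    | (Some a, Some c) \<Rightarrow> (0, dot a c))"

definition aug_succ :: "('a \<Rightarrow> 'a \<Rightarrow> 'a) \<Rightarrow> 'a::ab_group_add option \<Rightarrow> 'a option \<Rightarrow> 'k::field \<times> 'a" where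
  "aug_succ succ x y = (case (x, y) of
      (None, None) \<Rightarrow> undefined
    | (None, Some c) \<Rightarrow> (0, c)
    | (Some a, None) \<Rightarrow> (0, 0)
    | (Some a, Some c) \<Rightarrow> (0, succ a c))"

section \<open>Tensor product of vector spaces U, V over a field: free vector space on U \<times> V
  (finitely supported functions U \<times> V \<Rightarrow> K) modulo the bilinearity relations; elements are cosets.\<close>

definition fscale :: "'k::field \<Rightarrow> ('x \<Rightarrow> 'k) \<Rightarrow> ('x \<Rightarrow> 'k)" where
  "fscale s f = (\<lambda>x. s * f x)"

definition delta :: "'x \<Rightarrow> ('x \<Rightarrow> 'k::field)" where
  "delta x = (\<lambda>y. if y = x then 1 else 0)"

definition tensor_rels ::
  "('u \<Rightarrow> 'u \<Rightarrow> 'u) \<Rightarrow> ('k::field \<Rightarrow> 'u \<Rightarrow> 'u) \<Rightarrow> ('v \<Rightarrow> 'v \<Rightarrow> 'v) \<Rightarrow> ('k \<Rightarrow> 'v \<Rightarrow> 'v) \<Rightarrow>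
   ('u \<times> 'v \<Rightarrow> 'k) set" where
  "tensor_rels addU scU addV scV =
     {delta (addU u u', v) - delta (u, v) - delta (u', v) | u u' v. True} \<union>
     {delta (u, addV v v') - delta (u, v) - delta (u, v') | u v v'. True} \<union>
     {delta (scU s u, v) - fscale s (delta (u, v)) | s u v. True} \<union>
     {delta (u, scV s v) - fscale s (delta (u, v)) | s u v. True}"

definition tensor_null ::
  "('u \<Rightarrow> 'u \<Rightarrow> 'u) \<Rightarrow> ('k::field \<Rightarrow> 'u \<Rightarrow> 'u) \<Rightarrow> ('v \<Rightarrow> 'v \<Rightarrow> 'v) \<Rightarrow> ('k \<Rightarrow> 'v \<Rightarrow> 'v) \<Rightarrow>
   ('u \<times> 'v \<Rightarrow> 'k) set" where
  "tensor_null addU scU addV scV = module.span fscale (tensor_rels addU scU addV scV)"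

definition coset :: "('x \<Rightarrow> 'k::field) set \<Rightarrow> ('x \<Rightarrow> 'k) \<Rightarrow> ('x \<Rightarrow> 'k) set" where
  "coset N f = {f + n | n. n \<in> N}"

definition coset_add :: "('x \<Rightarrow> 'k::field) set \<Rightarrow> ('x \<Rightarrow> 'k) set \<Rightarrow> ('x \<Rightarrow> 'k) set" where
  "coset_add X Y = {x + y | x y. x \<in> X \<and> y \<in> Y}"

definition coset_scale :: "('x \<Rightarrow> 'k::field) set \<Rightarrow> 'k \<Rightarrow> ('x \<Rightarrow> 'k) set \<Rightarrow> ('x \<Rightarrow> 'k) set" where
  "coset_scale N s X = {fscale s x + n | x n. x \<in> X \<and> n \<in> N}"

definition augT_null ::
  "('k::field \<Rightarrow> 'a::ab_group_add \<Rightarrow> 'a) \<Rightarrow> ('k \<Rightarrow> 'b::ab_group_add \<Rightarrow> 'b) \<Rightarrow>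
   (('k \<times> 'a) \<times> ('k \<times> 'b) \<Rightarrow> 'k) set" where
  "augT_null scA scB = tensor_null aug_add (aug_scale scA) aug_add (aug_scale scB)"

definition augT_tensor ::
  "('k::field \<Rightarrow> 'a::ab_group_add \<Rightarrow> 'a) \<Rightarrow> ('k \<Rightarrow> 'b::ab_group_add \<Rightarrow> 'b) \<Rightarrow>
   'k \<times> 'a \<Rightarrow> 'k \<times> 'b \<Rightarrow> (('k \<times> 'a) \<times> ('k \<times> 'b) \<Rightarrow> 'k) set" where
  "augT_tensor scA scB u v = coset (augT_null scA scB) (delta (u, v))"

text \<open>A \<otimes>bar B = (A \<otimes> B) \<oplus> (K1 \<otimes> B) \<oplus> (A \<otimes> K1): the subspace spanned by the pure tensors
  x \<otimes> y with x \<in> {1} \<union> A, y \<in> {1} \<union> B, not both equal to 1.\<close>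
definition tensor_bar ::
  "('k::field \<Rightarrow> 'a::ab_group_add \<Rightarrow> 'a) \<Rightarrow> ('k \<Rightarrow> 'b::ab_group_add \<Rightarrow> 'b) \<Rightarrow>
   (('k \<times> 'a) \<times> ('k \<times> 'b) \<Rightarrow> 'k) set set" where
  "tensor_bar scA scB =
     coset (augT_null scA scB) `
       module.span fscale {delta (aug_emb x, aug_emb y) | x y. \<not> (x = None \<and> y = None)}"

text \<open>Here opA is the product on A and augopB the augmented product on {1} \<union> B.\<close>
definition tensor_bar_rule ::
  "('k::field \<Rightarrow> 'a::ab_group_add \<Rightarrow> 'a) \<Rightarrow> ('k \<Rightarrow> 'b::ab_group_add \<Rightarrow> 'b) \<Rightarrow>
   ('a \<Rightarrow> 'a \<Rightarrow> 'a) \<Rightarrow> ('a \<Rightarrow> 'a \<Rightarrow> 'a) \<Rightarrow> ('a \<Rightarrow> 'a \<Rightarrow> 'a) \<Rightarrow>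
   ('a \<Rightarrow> 'a \<Rightarrow> 'a) \<Rightarrow> ('b option \<Rightarrow> 'b option \<Rightarrow> 'k \<times> 'b) \<Rightarrow>
   ((('k \<times> 'a) \<times> ('k \<times> 'b) \<Rightarrow> 'k) set \<Rightarrow> (('k \<times> 'a) \<times> ('k \<times> 'b) \<Rightarrow> 'k) set \<Rightarrow>
    (('k \<times> 'a) \<times> ('k \<times> 'b) \<Rightarrow> 'k) set) \<Rightarrow> bool" where
  "tensor_bar_rule scA scB precA dotA succA opA augopB p \<longleftrightarrow>
     (\<forall>x y x' y'. \<not> (x = None \<and> y = None) \<longrightarrow> \<not> (x' = None \<and> y' = None) \<longrightarrow>
        p (augT_tensor scA scB (aug_emb x) (aug_emb y)) (augT_tensor scA scB (aug_emb x') (aug_emb y')) =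
          (if y = None \<and> y' = None
           then augT_tensor scA scB (0, opA (the x) (the x')) (1, 0)
           else augT_tensor scA scB (aug_star precA dotA succA x x') (augopB y y')))"

end

theory Submission
  imports Defs
begin



interpretation F: module "fscale :: 'k::field \<Rightarrow> ('x \<Rightarrow> 'k) \<Rightarrow> ('x \<Rightarrow> 'k)"
  by standard (auto simp: fscale_def fun_eq_iff algebra_simps)

lemma fscale_apply: "fscale s f x = s * f x" by (simp add: fscale_def)

section \<open>Cosets\<close>

lemma coset_eq_iff:
  "coset (F.span R) f = coset (F.span R) g \<longleftrightarrow> f - g \<in> F.span R"
proof
  assume h: "coset (F.span R) f = coset (F.span R) g"
  have "f \<in> coset (F.span R) f" unfolding coset_def by (auto intro!: exI[of _ 0] F.span_zero)
  then have "f \<in> coset (F.span R) g" using h by simp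
  then obtain n where "f = g + n" "n \<in> F.span R" unfolding coset_def by blast
  then show "f - g \<in> F.span R" by simp
next
  assume h: "f - g \<in> F.span R"
  show "coset (F.span R) f = coset (F.span R) g"
  proof (auto simp: coset_def)
    fix n assume "n \<in> F.span R"
    then show "\<exists>m. f + n = g + m \<and> m \<in> F.span R"
      using h by (intro exI[of _ "(f - g) + n"]) (auto intro: F.span_add)
  next
    fix n assume "n \<in> F.span R"
    then show "\<exists>m. g + n = f + m \<and> m \<in> F.span R"
      using h by (intro exI[of _ "n - (f - g)"]) (auto intro: F.span_diff)
  qed
qed

lemma coset_add_coset:
  "coset_add (coset (F.span R) f) (coset (F.span R) g) = coset (F.span R) (f + g)"
proof (intro set_eqI iffI)
  fix x assume "x \<in> coset_add (coset (F.span R) f) (coset (F.span R) g)"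
  then obtain n m where x: "x = (f + n) + (g + m)" "n \<in> F.span R" "m \<in> F.span R"
    by (auto simp: coset_add_def coset_def)
  then have "x = (f + g) + (n + m)" "n + m \<in> F.span R" by (auto simp: algebra_simps intro: F.span_add)
  then show "x \<in> coset (F.span R) (f + g)" unfolding coset_def by blast
next
  fix x assume "x \<in> coset (F.span R) (f + g)"
  then obtain n where x: "x = (f + g) + n" "n \<in> F.span R" by (auto simp: coset_def)
  have "f + n \<in> coset (F.span R) f" using x(2) unfolding coset_def by blast
  moreover have "g \<in> coset (F.span R) g" unfolding coset_def by (auto intro!: exI[of _ 0] F.span_zero)
  moreover have "x = (f + n) + g" using x(1) by (simp add: algebra_simps)
  ultimately show "x \<in> coset_add (coset (F.span R) f) (coset (F.span R) g)"
    unfolding coset_add_def by blast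
qed

lemma coset_scale_coset:
  "coset_scale (F.span R) s (coset (F.span R) f) = coset (F.span R) (fscale s f)"
proof (auto simp: coset_def coset_scale_def)
  fix n m assume "n \<in> F.span R" "m \<in> F.span R"
  then show "\<exists>k. fscale s (f + n) + m = fscale s f + k \<and> k \<in> F.span R"
    by (intro exI[of _ "fscale s n + m"]) (auto intro: F.span_add F.span_scale simp: F.scale_right_distrib)
next
  fix n assume "n \<in> F.span R"
  then show "\<exists>x m. fscale s f + n = fscale s x + m \<and> (\<exists>n. x = f + n \<and> n \<in> F.span R) \<and> m \<in> F.span R"
    by (intro exI[of _ "f"] exI[of _ n]) (auto intro: F.span_zero exI[of _ 0])
qed

lemma coset_add_comm: "coset_add X Y = coset_add Y X"
  unfolding coset_add_def by (auto simp: add.commute) (metis add.commute)+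
lemma coset_add_assoc: "coset_add (coset_add X Y) Z = coset_add X (coset_add Y Z)"
  unfolding coset_add_def by (auto simp: add.assoc) (metis add.assoc)+
lemma coset_add_lcomm: "coset_add X (coset_add Y Z) = coset_add Y (coset_add X Z)"
  by (metis coset_add_assoc coset_add_comm)

section \<open>Finite support and linear extension\<close>

definition fin :: "('x \<Rightarrow> 'k::field) \<Rightarrow> bool" where
  "fin g \<longleftrightarrow> finite {z. g z \<noteq> 0}"

definition ext :: "('x \<Rightarrow> ('y \<Rightarrow> 'k::field)) \<Rightarrow> ('x \<Rightarrow> 'k) \<Rightarrow> ('y \<Rightarrow> 'k)" where
  "ext \<phi> g = (\<Sum>z\<in>{z. g z \<noteq> 0}. fscale (g z) (\<phi> z))"

lemma ext_superset:
  assumes "finite S" "{z. g z \<noteq> 0} \<subseteq> S"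
  shows "ext \<phi> g = (\<Sum>z\<in>S. fscale (g z) (\<phi> z))"
  unfolding ext_def
  by (rule sum.mono_neutral_left) (use assms in \<open>auto simp: fscale_def fun_eq_iff\<close>)

lemma fin_0[simp]: "fin 0" by (simp add: fin_def)
lemma fin_add: "fin f \<Longrightarrow> fin g \<Longrightarrow> fin (f + g)"
  unfolding fin_def by (rule finite_subset[of _ "{z. f z \<noteq> 0} \<union> {z. g z \<noteq> 0}"]) auto
lemma fin_diff: "fin f \<Longrightarrow> fin g \<Longrightarrow> fin (f - g)"
  unfolding fin_def by (rule finite_subset[of _ "{z. f z \<noteq> 0} \<union> {z. g z \<noteq> 0}"]) auto
lemma fin_scale: "fin f \<Longrightarrow> fin (fscale s f)"
  unfolding fin_def by (rule finite_subset[of _ "{z. f z \<noteq> 0}"]) (auto simp: fscale_apply)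
lemma fin_delta[simp]: "fin (delta z)"
  unfolding fin_def delta_def by (rule finite_subset[of _ "{z}"]) auto
lemma fin_span: assumes "\<And>r. r \<in> R \<Longrightarrow> fin r" "f \<in> F.span R" shows "fin f"
  using assms(2)
proof (induction f rule: F.span_induct_alt)
  case base then show ?case by (simp add: fin_def)
next
  case (step c x y) then show ?case using fin_add fin_scale assms(1) unfolding plus_fun_def by metis
qed

lemma ext_zero[simp]: "ext \<phi> 0 = 0" by (simp add: ext_def)

lemma ext_add:
  assumes "fin f" "fin g" shows "ext \<phi> (f + g) = ext \<phi> f + ext \<phi> g"
proof -
  let ?S = "{z. f z \<noteq> 0} \<union> {z. g z \<noteq> 0}"
  have fS: "finite ?S" using assms by (simp add: fin_def)
  have "ext \<phi> (f + g) = (\<Sum>z\<in>?S. fscale ((f+g) z) (\<phi> z))" by (rule ext_superset[OF fS]) auto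
  also have "\<dots> = (\<Sum>z\<in>?S. fscale (f z) (\<phi> z)) + (\<Sum>z\<in>?S. fscale (g z) (\<phi> z))"
    by (simp add: F.scale_left_distrib sum.distrib)
  also have "\<dots> = ext \<phi> f + ext \<phi> g" by (simp add: ext_superset[OF fS])
  finally show ?thesis .
qed

lemma ext_diff:
  assumes "fin f" "fin g" shows "ext \<phi> (f - g) = ext \<phi> f - ext \<phi> g"
proof -
  let ?S = "{z. f z \<noteq> 0} \<union> {z. g z \<noteq> 0}"
  have fS: "finite ?S" using assms by (simp add: fin_def)
  have "ext \<phi> (f - g) = (\<Sum>z\<in>?S. fscale ((f-g) z) (\<phi> z))" by (rule ext_superset[OF fS]) auto
  also have "\<dots> = (\<Sum>z\<in>?S. fscale (f z) (\<phi> z)) - (\<Sum>z\<in>?S. fscale (g z) (\<phi> z))"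
    by (simp add: F.scale_left_diff_distrib sum_subtractf)
  also have "\<dots> = ext \<phi> f - ext \<phi> g" by (simp add: ext_superset[OF fS])
  finally show ?thesis .
qed

lemma ext_scale:
  assumes "fin f" shows "ext \<phi> (fscale s f) = fscale s (ext \<phi> f)"
proof -
  let ?S = "{z. f z \<noteq> 0}"
  have fS: "finite ?S" using assms by (simp add: fin_def)
  have "ext \<phi> (fscale s f) = (\<Sum>z\<in>?S. fscale (fscale s f z) (\<phi> z))" by (rule ext_superset[OF fS]) (auto simp: fscale_apply)
  also have "\<dots> = fscale s (ext \<phi> f)"
    by (simp add: ext_def F.scale_sum_right fscale_apply)
  finally show ?thesis .
qed

lemma ext_delta[simp]: "ext \<phi> (delta z) = \<phi> z"
proof -
  have "ext \<phi> (delta z) = (\<Sum>w\<in>{z}. fscale (delta z w) (\<phi> w))"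
    by (rule ext_superset) (auto simp: delta_def)
  then show ?thesis by (simp add: delta_def)
qed

lemma ext_fun_add: "ext (\<lambda>z. \<phi> z + \<chi> z) g = ext \<phi> g + ext \<chi> g"
  by (simp add: ext_def F.scale_right_distrib sum.distrib)
lemma ext_fun_diff: "ext (\<lambda>z. \<phi> z - \<chi> z) g = ext \<phi> g - ext \<chi> g"
  by (simp add: ext_def F.scale_right_diff_distrib sum_subtractf)
lemma ext_fun_scale: "ext (\<lambda>z. fscale s (\<phi> z)) g = fscale s (ext \<phi> g)"
  by (simp add: ext_def F.scale_sum_right mult.commute)
lemma ext_fun_0: "ext (\<lambda>z. 0) g = 0"
  by (simp add: ext_def)

lemma ext_in_span: "(\<And>z. \<phi> z \<in> F.span R) \<Longrightarrow> ext \<phi> g \<in> F.span R"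
  unfolding ext_def by (intro F.span_sum F.span_scale) auto

lemma ext_swap:
  assumes "fin f" "fin g"
  shows "ext (\<lambda>z. ext (\<lambda>w. \<psi> z w) g) f = ext (\<lambda>w. ext (\<lambda>z. \<psi> z w) f) g"
proof -
  have ff: "finite {z. f z \<noteq> 0}" "finite {z. g z \<noteq> 0}" using assms by (auto simp: fin_def)
  show ?thesis
    unfolding ext_def
    by (simp add: F.scale_sum_right sum.swap[of _ "{z. f z \<noteq> 0}"] mult.commute mult.left_commute)
qed

lemma ext_resp:
  assumes "\<And>r. r \<in> R \<Longrightarrow> ext \<phi> r \<in> F.span R" "\<And>r. r \<in> R \<Longrightarrow> fin r"
    and "f \<in> F.span R"
  shows "ext \<phi> f \<in> F.span R"
proof -
  have "fin f \<and> ext \<phi> f \<in> F.span R"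
  proof (rule F.span_induct_alt[OF assms(3), where h="\<lambda>f. fin f \<and> ext \<phi> f \<in> F.span R"])
    show "fin 0 \<and> ext \<phi> 0 \<in> F.span R" by (simp add: F.span_zero)
  next
    fix c x y assume step: "x \<in> R" "fin y \<and> ext \<phi> y \<in> F.span R"
    have fx: "fin x" using step assms(2) by auto
    have fy: "fin y" using step by auto
    have "ext \<phi> (fscale c x + y) = fscale c (ext \<phi> x) + ext \<phi> y"
      using fx fy by (simp add: ext_add fin_scale ext_scale)
    moreover have "fscale c (ext \<phi> x) + ext \<phi> y \<in> F.span R"
      using step assms(1) by (intro F.span_add F.span_scale) auto
    ultimately show "fin (fscale c x + y) \<and> ext \<phi> (fscale c x + y) \<in> F.span R" using fx fy by (simp add: fin_add fin_scale)
  qed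
  then show ?thesis by simp
qed


lemma fid_a: "((D1::'x\<Rightarrow>'k::field) + fscale c E1) - (D2 + fscale c E2) - (D3 + fscale c E3) = (D1 - D2 - D3) + fscale c (E1 - E2 - E3)"
  by (simp add: fun_eq_iff fscale_apply algebra_simps)
lemma fid_b: "((D1::'x\<Rightarrow>'k::field) + fscale c1 E) - (D2 + fscale c2 E) - (D3 + fscale c3 E) = (D1 - D2 - D3) + fscale (c1 - c2 - c3) E"
  by (simp add: fun_eq_iff fscale_apply algebra_simps)
lemma fid_c: "((D1::'x\<Rightarrow>'k::field) + fscale c E1) - fscale s (D2 + fscale c E2) = (D1 - fscale s D2) + fscale c (E1 - fscale s E2)"
  by (simp add: fun_eq_iff fscale_apply algebra_simps)
lemma fid_d: "((D1::'x\<Rightarrow>'k::field) + fscale c1 E) - fscale s (D2 + fscale c2 E) = (D1 - fscale s D2) + fscale (c1 - s * c2) E"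
  by (simp add: fun_eq_iff fscale_apply algebra_simps)

definition bilg :: "('v \<Rightarrow> 'v \<Rightarrow> 'v) \<Rightarrow> ('k \<Rightarrow> 'v \<Rightarrow> 'v) \<Rightarrow> ('v \<Rightarrow> 'v \<Rightarrow> 'v) \<Rightarrow> bool" where
  "bilg add sc op \<longleftrightarrow> (\<forall>x y z. op (add x y) z = add (op x z) (op y z) \<and> op x (add y z) = add (op x y) (op x z)) \<and>
     (\<forall>s x y. op (sc s x) y = sc s (op x y) \<and> op x (sc s y) = sc s (op x y))"

definition mulA :: "('k::field \<Rightarrow> 'a::ab_group_add \<Rightarrow> 'a) \<Rightarrow> ('a \<Rightarrow> 'a \<Rightarrow> 'a) \<Rightarrow> 'k \<times> 'a \<Rightarrow> 'k \<times> 'a \<Rightarrow> 'k \<times> 'a" where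
  "mulA sc st u v = (fst u * fst v, sc (fst u) (snd v) + sc (fst v) (snd u) + st (snd u) (snd v))"

definition psi :: "('k::field \<Rightarrow> 'a::ab_group_add \<Rightarrow> 'a) \<Rightarrow> ('a \<Rightarrow> 'a \<Rightarrow> 'a) \<Rightarrow> ('a \<Rightarrow> 'a \<Rightarrow> 'a) \<Rightarrow>
   ('k \<times> 'b \<Rightarrow> 'k \<times> 'b \<Rightarrow> 'k \<times> 'b::ab_group_add) \<Rightarrow> ('k \<times> 'a) \<times> ('k \<times> 'b) \<Rightarrow> ('k \<times> 'a) \<times> ('k \<times> 'b) \<Rightarrow>
   (('k \<times> 'a) \<times> ('k \<times> 'b) \<Rightarrow> 'k)" where
  "psi sc st oA mB z w = delta (mulA sc st (fst z) (fst w), mB (snd z) (snd w)) +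
     fscale (fst (snd z) * fst (snd w)) (delta ((0, oA (snd (fst z)) (snd (fst w))), (1, 0)))"

definition PP where "PP sc st oA mB f g = ext (\<lambda>z. ext (psi sc st oA mB z) g) f"

locale tctx = A: vector_space scA + B: vector_space scB
  for scA :: "'k::field \<Rightarrow> 'a::ab_group_add \<Rightarrow> 'a" and scB :: "'k \<Rightarrow> 'b::ab_group_add \<Rightarrow> 'b"
begin

abbreviation "RR \<equiv> tensor_rels aug_add (aug_scale scA) aug_add (aug_scale scB)"
abbreviation "NN \<equiv> augT_null scA scB"

lemma NN_eq: "NN = F.span RR" by (simp add: augT_null_def tensor_null_def)

lemma RR_fin: "r \<in> RR \<Longrightarrow> fin r"
  unfolding tensor_rels_def by (auto intro!: fin_diff fin_scale)

lemma rel1: "delta (aug_add u u', v) - delta (u, v) - delta (u', v) \<in> NN"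
  unfolding NN_eq by (rule F.span_base) (unfold tensor_rels_def, blast)
lemma rel2: "delta (u, aug_add v v') - delta (u, v) - delta (u, v') \<in> NN"
  unfolding NN_eq by (rule F.span_base) (unfold tensor_rels_def, blast)
lemma rel3: "delta (aug_scale scA s u, v) - fscale s (delta (u, v)) \<in> NN"
  unfolding NN_eq by (rule F.span_base) (unfold tensor_rels_def, blast)
lemma rel4: "delta (u, aug_scale scB s v) - fscale s (delta (u, v)) \<in> NN"
  unfolding NN_eq by (rule F.span_base) (unfold tensor_rels_def, blast)

lemma NN_add: "x \<in> NN \<Longrightarrow> y \<in> NN \<Longrightarrow> x + y \<in> NN" unfolding NN_eq by (rule F.span_add)
lemma NN_diff: "x \<in> NN \<Longrightarrow> y \<in> NN \<Longrightarrow> x - y \<in> NN" unfolding NN_eq by (rule F.span_diff)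
lemma NN_scale: "x \<in> NN \<Longrightarrow> fscale c x \<in> NN" unfolding NN_eq by (rule F.span_scale)
lemma NN_zero: "0 \<in> NN" unfolding NN_eq by (rule F.span_zero)
lemma NN_fin: "x \<in> NN \<Longrightarrow> fin x" unfolding NN_eq by (rule fin_span[OF RR_fin])

lemma delta_zero_right: "delta (u, (0::'k, 0::'b)) \<in> NN"
proof -
  have "delta (u, aug_scale scB 0 (0, 0)) - fscale 0 (delta (u, (0::'k, 0::'b))) \<in> NN" by (rule rel4)
  moreover have "aug_scale scB 0 (0, 0) = (0::'k, 0::'b)" by (simp add: aug_scale_def)
  moreover have "fscale (0::'k) (delta (u, (0::'k, 0::'b))) = 0" by (simp add: fun_eq_iff fscale_apply)
  ultimately show ?thesis by simp
qed

lemma delta_zero_left: "delta (((0::'k), (0::'a)), v) \<in> NN"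
proof -
  have "delta (aug_scale scA 0 (0, 0), v) - fscale 0 (delta (((0::'k), (0::'a)), v)) \<in> NN" by (rule rel3)
  moreover have "aug_scale scA 0 (0, 0) = (0::'k, 0::'a)" by (simp add: aug_scale_def)
  moreover have "fscale (0::'k) (delta (((0::'k), (0::'a)), v)) = 0" by (simp add: fun_eq_iff fscale_apply)
  ultimately show ?thesis by simp
qed

lemma resp_of:
  assumes c1: "\<And>u u' v. \<phi> (aug_add u u', v) - \<phi> (u, v) - \<phi> (u', v) \<in> NN"
      and c2: "\<And>u v v'. \<phi> (u, aug_add v v') - \<phi> (u, v) - \<phi> (u, v') \<in> NN"
      and c3: "\<And>s u v. \<phi> (aug_scale scA s u, v) - fscale s (\<phi> (u, v)) \<in> NN"
      and c4: "\<And>s u v. \<phi> (u, aug_scale scB s v) - fscale s (\<phi> (u, v)) \<in> NN"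
      and r: "r \<in> RR"
  shows "ext \<phi> r \<in> NN"
  using r unfolding tensor_rels_def
  by (auto simp: ext_diff ext_scale fin_diff fin_scale intro: c1 c2 c3 c4)

end

locale pctx = tctx scA scB
  for scA :: "'k::field \<Rightarrow> 'a::ab_group_add \<Rightarrow> 'a" and scB :: "'k \<Rightarrow> 'b::ab_group_add \<Rightarrow> 'b" +
  fixes st oA :: "'a \<Rightarrow> 'a \<Rightarrow> 'a" and mB :: "'k \<times> 'b \<Rightarrow> 'k \<times> 'b \<Rightarrow> 'k \<times> 'b"
  assumes bst: "bilg (+) scA st" and boA: "bilg (+) scA oA" and bmB: "bilg aug_add (aug_scale scB) mB"
begin

lemma st_add1: "st (x + y) z = st x z + st y z" and st_add2: "st x (y + z) = st x y + st x z"
  and st_sc1: "st (scA s x) y = scA s (st x y)" and st_sc2: "st x (scA s y) = scA s (st x y)"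
  using bst unfolding bilg_def by blast+
lemma oA_add1: "oA (x + y) z = oA x z + oA y z" and oA_add2: "oA x (y + z) = oA x y + oA x z"
  and oA_sc1: "oA (scA s x) y = scA s (oA x y)" and oA_sc2: "oA x (scA s y) = scA s (oA x y)"
  using boA unfolding bilg_def by blast+
lemma mB_add1: "mB (aug_add x y) z = aug_add (mB x z) (mB y z)" and mB_add2: "mB x (aug_add y z) = aug_add (mB x y) (mB x z)"
  and mB_sc1: "mB (aug_scale scB s x) y = aug_scale scB s (mB x y)" and mB_sc2: "mB x (aug_scale scB s y) = aug_scale scB s (mB x y)"
  using bmB unfolding bilg_def by blast+

lemma mulA_add1: "mulA scA st (aug_add u u') v = aug_add (mulA scA st u v) (mulA scA st u' v)"
  by (simp add: mulA_def aug_add_def st_add1 A.scale_left_distrib A.scale_right_distrib algebra_simps)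
lemma mulA_add2: "mulA scA st u (aug_add v v') = aug_add (mulA scA st u v) (mulA scA st u v')"
  by (simp add: mulA_def aug_add_def st_add2 A.scale_left_distrib A.scale_right_distrib algebra_simps)
lemma mulA_sc1: "mulA scA st (aug_scale scA s u) v = aug_scale scA s (mulA scA st u v)"
  by (simp add: mulA_def aug_scale_def st_sc1 A.scale_right_distrib algebra_simps)
lemma mulA_sc2: "mulA scA st u (aug_scale scA s v) = aug_scale scA s (mulA scA st u v)"
  by (simp add: mulA_def aug_scale_def st_sc2 A.scale_right_distrib algebra_simps)

abbreviation "ps \<equiv> psi scA st oA mB"

lemma pair0_add: "((0::'k), x + y) = aug_add (0, x) (0, y)" by (simp add: aug_add_def)
lemma pair0_sc: "((0::'k), scA s x) = aug_scale scA s (0, x)" by (simp add: aug_scale_def)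

lemma L1: "ps (aug_add u u', v) w - ps (u, v) w - ps (u', v) w \<in> NN"
proof -
  have e: "((0::'k), oA (snd (aug_add u u')) (snd (fst w))) = aug_add (0, oA (snd u) (snd (fst w))) (0, oA (snd u') (snd (fst w)))"
    by (simp add: aug_add_def oA_add1)
  show ?thesis
    unfolding psi_def fst_conv snd_conv fid_a mulA_add1 e
    by (intro NN_add NN_scale rel1)
qed

lemma L2: "ps (u, aug_add v v') w - ps (u, v) w - ps (u, v') w \<in> NN"
proof -
  have e: "fst (aug_add v v') * fst (snd w) - fst v * fst (snd w) - fst v' * fst (snd w) = 0"
    by (simp add: aug_add_def algebra_simps)
  have z: "fscale (0::'k) (x::('k \<times> 'a) \<times> 'k \<times> 'b \<Rightarrow> 'k) = 0" for x by (simp add: fun_eq_iff fscale_apply)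
  show ?thesis
    unfolding psi_def fst_conv snd_conv fid_b mB_add1 e z
    by (simp add: rel1 rel2)
qed

lemma L3: "ps (aug_scale scA s u, v) w - fscale s (ps (u, v) w) \<in> NN"
proof -
  have e: "((0::'k), oA (snd (aug_scale scA s u)) (snd (fst w))) = aug_scale scA s (0, oA (snd u) (snd (fst w)))"
    by (simp add: aug_scale_def oA_sc1)
  show ?thesis
    unfolding psi_def fst_conv snd_conv fid_c mulA_sc1 e
    by (intro NN_add NN_scale rel3)
qed

lemma L4: "ps (u, aug_scale scB s v) w - fscale s (ps (u, v) w) \<in> NN"
proof -
  have e: "fst (aug_scale scB s v) * fst (snd w) - s * (fst v * fst (snd w)) = 0"
    by (simp add: aug_scale_def algebra_simps)
  have z: "fscale (0::'k) (x::('k \<times> 'a) \<times> 'k \<times> 'b \<Rightarrow> 'k) = 0" for x by (simp add: fun_eq_iff fscale_apply)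
  show ?thesis
    unfolding psi_def fst_conv snd_conv fid_d mB_sc1 e z
    by (simp add: rel4)
qed

lemma R1: "ps z (aug_add u u', v) - ps z (u, v) - ps z (u', v) \<in> NN"
proof -
  have e: "((0::'k), oA (snd (fst z)) (snd (aug_add u u'))) = aug_add (0, oA (snd (fst z)) (snd u)) (0, oA (snd (fst z)) (snd u'))"
    by (simp add: aug_add_def oA_add2)
  show ?thesis
    unfolding psi_def fst_conv snd_conv fid_a mulA_add2 e
    by (intro NN_add NN_scale rel1)
qed

lemma R2: "ps z (u, aug_add v v') - ps z (u, v) - ps z (u, v') \<in> NN"
proof -
  have e: "fst (snd z) * fst (aug_add v v') - fst (snd z) * fst v - fst (snd z) * fst v' = 0"
    by (simp add: aug_add_def algebra_simps)
  have z: "fscale (0::'k) (x::('k \<times> 'a) \<times> 'k \<times> 'b \<Rightarrow> 'k) = 0" for x by (simp add: fun_eq_iff fscale_apply)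
  show ?thesis
    unfolding psi_def fst_conv snd_conv fid_b mB_add2 e z
    by (simp add: rel2)
qed

lemma R3: "ps z (aug_scale scA s u, v) - fscale s (ps z (u, v)) \<in> NN"
proof -
  have e: "((0::'k), oA (snd (fst z)) (snd (aug_scale scA s u))) = aug_scale scA s (0, oA (snd (fst z)) (snd u))"
    by (simp add: aug_scale_def oA_sc2)
  show ?thesis
    unfolding psi_def fst_conv snd_conv fid_c mulA_sc2 e
    by (intro NN_add NN_scale rel3)
qed

lemma R4: "ps z (u, aug_scale scB s v) - fscale s (ps z (u, v)) \<in> NN"
proof -
  have e: "fst (snd z) * fst (aug_scale scB s v) - s * (fst (snd z) * fst v) = 0"
    by (simp add: aug_scale_def algebra_simps)
  have z: "fscale (0::'k) (x::('k \<times> 'a) \<times> 'k \<times> 'b \<Rightarrow> 'k) = 0" for x by (simp add: fun_eq_iff fscale_apply)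
  show ?thesis
    unfolding psi_def fst_conv snd_conv fid_d mB_sc2 e z
    by (simp add: rel4)
qed
abbreviation "P \<equiv> PP scA st oA mB"

lemma P_add1: "fin f1 \<Longrightarrow> fin f2 \<Longrightarrow> P (f1 + f2) g = P f1 g + P f2 g"
  unfolding PP_def by (rule ext_add)
lemma P_diff1: "fin f1 \<Longrightarrow> fin f2 \<Longrightarrow> P (f1 - f2) g = P f1 g - P f2 g"
  unfolding PP_def by (rule ext_diff)
lemma P_scale1: "fin f \<Longrightarrow> P (fscale c f) g = fscale c (P f g)"
  unfolding PP_def by (rule ext_scale)
lemma P_add2: "fin g1 \<Longrightarrow> fin g2 \<Longrightarrow> P f (g1 + g2) = P f g1 + P f g2"
  unfolding PP_def by (simp add: ext_add ext_fun_add)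
lemma P_diff2: "fin g1 \<Longrightarrow> fin g2 \<Longrightarrow> P f (g1 - g2) = P f g1 - P f g2"
  unfolding PP_def by (simp add: ext_diff ext_fun_diff)
lemma P_scale2: "fin g \<Longrightarrow> P f (fscale c g) = fscale c (P f g)"
  unfolding PP_def by (simp add: ext_scale ext_fun_scale)
lemma P_zero2: "P f 0 = 0"
  unfolding PP_def by (simp add: ext_fun_0)
lemma P_zero1: "P 0 g = 0"
  unfolding PP_def by simp
lemma P_delta: "P (delta z) (delta w) = ps z w"
  unfolding PP_def by simp

lemma P_N1: assumes "f \<in> NN" "fin g" shows "P f g \<in> NN"
proof -
  have ff: "fin f" using assms(1) by (rule NN_fin)
  have "P f g = ext (\<lambda>w. ext (\<lambda>z. ps z w) f) g" unfolding PP_def by (rule ext_swap[OF ff assms(2)])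
  moreover have "ext (\<lambda>z. ps z w) f \<in> NN" for w
  proof -
    have "ext (\<lambda>z. ps z w) f \<in> F.span RR"
      apply (rule ext_resp[OF _ RR_fin])
      subgoal for r unfolding NN_eq[symmetric] by (rule resp_of[OF L1 L2 L3 L4])
      using assms(1) NN_eq by auto
    then show ?thesis using NN_eq by simp
  qed
  ultimately show ?thesis unfolding NN_eq by (simp add: ext_in_span)
qed

lemma P_N2: assumes "g \<in> NN" "fin f" shows "P f g \<in> NN"
proof -
  have "ext (ps z) g \<in> NN" for z
  proof -
    have "ext (ps z) g \<in> F.span RR"
      apply (rule ext_resp[OF _ RR_fin])
      subgoal for r unfolding NN_eq[symmetric] by (rule resp_of[OF R1 R2 R3 R4])
      using assms(1) NN_eq by auto
    then show ?thesis using NN_eq by simp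
  qed
  then show ?thesis unfolding NN_eq PP_def by (simp add: ext_in_span)
qed


end




context tctx
begin

abbreviation "Bas \<equiv> {delta (aug_emb x, aug_emb y) | x y. \<not> (x = None \<and> y = None)} :: (('k \<times> 'a) \<times> ('k \<times> 'b) \<Rightarrow> 'k) set"
abbreviation "SS \<equiv> tensor_bar scA scB"

lemma SS_eq: "SS = coset NN ` F.span Bas" by (simp add: tensor_bar_def)

lemma Bas_fin: "b \<in> Bas \<Longrightarrow> fin b" by auto
lemma spanBas_fin: "f \<in> F.span Bas \<Longrightarrow> fin f" by (rule fin_span[OF Bas_fin])

lemma cosetN_eq: "coset NN f = coset NN g \<longleftrightarrow> f - g \<in> NN"
  unfolding NN_eq by (rule coset_eq_iff)
lemma cosetN_add: "coset_add (coset NN f) (coset NN g) = coset NN (f + g)"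
  unfolding NN_eq by (rule coset_add_coset)
lemma cosetN_scale: "coset_scale NN s (coset NN f) = coset NN (fscale s f)"
  unfolding NN_eq by (rule coset_scale_coset)

definition rep :: "(('k \<times> 'a) \<times> ('k \<times> 'b) \<Rightarrow> 'k) set \<Rightarrow> (('k \<times> 'a) \<times> ('k \<times> 'b) \<Rightarrow> 'k)" where
  "rep X = (SOME f. f \<in> F.span Bas \<and> X = coset NN f)"

lemma rep: assumes "X \<in> SS" shows "rep X \<in> F.span Bas" "X = coset NN (rep X)"
proof -
  have "\<exists>f. f \<in> F.span Bas \<and> X = coset NN f" using assms SS_eq by auto
  then have "rep X \<in> F.span Bas \<and> X = coset NN (rep X)" unfolding rep_def by (rule someI_ex)
  then show "rep X \<in> F.span Bas" "X = coset NN (rep X)" by auto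
qed

lemma SS_obtain: assumes "X \<in> SS" obtains f where "f \<in> F.span Bas" "X = coset NN f"
  using assms SS_eq by auto

lemma SS_I: "f \<in> F.span Bas \<Longrightarrow> coset NN f \<in> SS" using SS_eq by auto

lemma SS_I2: assumes "f \<in> F.span Bas" "g - f \<in> NN" shows "coset NN g \<in> SS"
proof -
  have "coset NN g = coset NN f" using assms(2) cosetN_eq by blast
  then show ?thesis using SS_I[OF assms(1)] by simp
qed

lemma SS_add: assumes "X \<in> SS" "Y \<in> SS" shows "coset_add X Y \<in> SS"
proof -
  obtain f where f: "f \<in> F.span Bas" "X = coset NN f" using assms(1) by (rule SS_obtain)
  obtain g where g: "g \<in> F.span Bas" "Y = coset NN g" using assms(2) by (rule SS_obtain)
  show ?thesis unfolding f(2) g(2) cosetN_add by (rule SS_I, rule F.span_add[OF f(1) g(1)])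
qed
lemma SS_scale: assumes "X \<in> SS" shows "coset_scale NN s X \<in> SS"
proof -
  obtain f where f: "f \<in> F.span Bas" "X = coset NN f" using assms(1) by (rule SS_obtain)
  show ?thesis unfolding f(2) cosetN_scale by (rule SS_I, rule F.span_scale[OF f(1)])
qed

lemma tensor_SS: "\<not> (x = None \<and> y = None) \<Longrightarrow> augT_tensor scA scB (aug_emb x) (aug_emb y) \<in> SS"
  unfolding augT_tensor_def by (rule SS_I, rule F.span_base) blast

end

context pctx
begin

definition pr :: "(('k \<times> 'a) \<times> ('k \<times> 'b) \<Rightarrow> 'k) set \<Rightarrow> (('k \<times> 'a) \<times> ('k \<times> 'b) \<Rightarrow> 'k) set \<Rightarrow> (('k \<times> 'a) \<times> ('k \<times> 'b) \<Rightarrow> 'k) set" where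
  "pr X Y = coset NN (P (rep X) (rep Y))"

lemma pr_wd:
  assumes "X \<in> SS" "Y \<in> SS" "X = coset NN f" "Y = coset NN g" "fin f" "fin g"
  shows "pr X Y = coset NN (P f g)"
proof -
  have "coset NN (rep X) = coset NN f" using rep(2)[OF assms(1)] assms(3) by simp
  then have r1: "rep X - f \<in> NN" using cosetN_eq by blast
  have "coset NN (rep Y) = coset NN g" using rep(2)[OF assms(2)] assms(4) by simp
  then have r2: "rep Y - g \<in> NN" using cosetN_eq by blast
  have fX: "fin (rep X)" using rep[OF assms(1)] spanBas_fin by auto
  have fY: "fin (rep Y)" using rep[OF assms(2)] spanBas_fin by auto
  have "P (rep X) (rep Y) - P f g = P (rep X - f) (rep Y) + P f (rep Y - g)"
    using fX fY assms(5,6) by (simp add: P_diff1 P_diff2)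
  moreover have "P (rep X - f) (rep Y) \<in> NN" using r1 fY by (rule P_N1)
  moreover have "P f (rep Y - g) \<in> NN" using r2 assms(5) by (rule P_N2)
  ultimately have "P (rep X) (rep Y) - P f g \<in> NN" by (simp add: NN_add)
  then show ?thesis unfolding pr_def using cosetN_eq by blast
qed

abbreviation "MM \<equiv> {h. \<exists>h'\<in>F.span Bas. h - h' \<in> NN}"

lemma MM_zero: "0 \<in> MM" by (intro CollectI bexI[of _ 0]) (simp_all add: F.span_zero NN_zero)
lemma MM_add: assumes "h1 \<in> MM" "h2 \<in> MM" shows "h1 + h2 \<in> MM"
proof -
  obtain a1 a2 where "a1 \<in> F.span Bas" "h1 - a1 \<in> NN" "a2 \<in> F.span Bas" "h2 - a2 \<in> NN" using assms by auto
  then show ?thesis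
    by (intro CollectI bexI[of _ "a1 + a2"]) (auto intro: F.span_add dest: NN_add simp: algebra_simps)
qed
lemma MM_scale: assumes "h \<in> MM" shows "fscale c h \<in> MM"
proof -
  obtain a where "a \<in> F.span Bas" "h - a \<in> NN" using assms by auto
  then show ?thesis
    by (intro CollectI bexI[of _ "fscale c a"]) (auto intro: F.span_scale dest: NN_scale[of _ c] simp: F.scale_right_diff_distrib)
qed

lemma clos:
  assumes H: "\<And>b1 b2. b1 \<in> Bas \<Longrightarrow> b2 \<in> Bas \<Longrightarrow> P b1 b2 \<in> MM"
    and f: "f \<in> F.span Bas" and g: "g \<in> F.span Bas"
  shows "P f g \<in> MM"
proof -
  have step1: "fin g \<and> P b g \<in> MM" if b: "b \<in> Bas" and g: "g \<in> F.span Bas" for b g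
  proof (rule F.span_induct_alt[OF g, where h="\<lambda>g. fin g \<and> P b g \<in> MM"])
    show "fin 0 \<and> P b 0 \<in> MM" unfolding P_zero2 by (intro conjI fin_0 MM_zero)
  next
    fix c x y assume x: "x \<in> Bas" and y: "fin y \<and> P b y \<in> MM"
    have fx: "fin x" using x by (rule Bas_fin)
    have "P b (fscale c x + y) = fscale c (P b x) + P b y"
      using fx y by (simp add: P_add2 P_scale2 fin_scale)
    moreover have "fscale c (P b x) + P b y \<in> MM" using H[OF b x] y by (intro MM_add MM_scale) auto
    ultimately show "fin (fscale c x + y) \<and> P b (fscale c x + y) \<in> MM" using fx y by (simp add: fin_add fin_scale)
  qed
  have "fin f \<and> P f g \<in> MM"
  proof (rule F.span_induct_alt[OF f, where h="\<lambda>f. fin f \<and> P f g \<in> MM"])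
    show "fin 0 \<and> P 0 g \<in> MM" unfolding P_zero1 by (intro conjI fin_0 MM_zero)
  next
    fix c x y assume x: "x \<in> Bas" and y: "fin y \<and> P y g \<in> MM"
    have fx: "fin x" using x by (rule Bas_fin)
    have "P (fscale c x + y) g = fscale c (P x g) + P y g"
      using fx y by (simp add: P_add1 P_scale1 fin_scale)
    moreover have "fscale c (P x g) + P y g \<in> MM" using step1[OF x g] y by (intro MM_add MM_scale) auto
    ultimately show "fin (fscale c x + y) \<and> P (fscale c x + y) g \<in> MM" using fx y by (simp add: fin_add fin_scale)
  qed
  then show ?thesis by simp
qed

lemma exists_prod:
  assumes H: "\<And>(x::'a option) (y::'b option) x' y'. \<not> (x = None \<and> y = None) \<Longrightarrow> \<not> (x' = None \<and> y' = None) \<Longrightarrow>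
     \<exists>h\<in>F.span Bas. ps (aug_emb x, aug_emb y) (aug_emb x', aug_emb y') - h \<in> NN"
  shows "\<exists>p. bilinear_on SS coset_add (coset_scale NN) p \<and>
    (\<forall>(x::'a option) (y::'b option) x' y'. \<not> (x = None \<and> y = None) \<longrightarrow> \<not> (x' = None \<and> y' = None) \<longrightarrow>
       p (augT_tensor scA scB (aug_emb x) (aug_emb y)) (augT_tensor scA scB (aug_emb x') (aug_emb y'))
       = coset NN (ps (aug_emb x, aug_emb y) (aug_emb x', aug_emb y')))"
proof (intro exI conjI allI impI)
  have HB: "P b1 b2 \<in> MM" if "b1 \<in> Bas" "b2 \<in> Bas" for b1 b2
    using that H by (auto simp: P_delta)
  show "bilinear_on SS coset_add (coset_scale NN) pr"
    unfolding bilinear_on_def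
  proof (intro conjI ballI allI)
    fix X Y assume X: "X \<in> SS" and Y: "Y \<in> SS"
    have "P (rep X) (rep Y) \<in> MM" using clos[OF HB rep(1)[OF X] rep(1)[OF Y]] by blast
    then show "pr X Y \<in> SS" unfolding pr_def using SS_I2 by blast
  next
    fix X Y Z assume X: "X \<in> SS" and Y: "Y \<in> SS" and Z: "Z \<in> SS"
    obtain f where f: "f \<in> F.span Bas" "X = coset NN f" using X by (rule SS_obtain)
    obtain g where g: "g \<in> F.span Bas" "Y = coset NN g" using Y by (rule SS_obtain)
    obtain h where h: "h \<in> F.span Bas" "Z = coset NN h" using Z by (rule SS_obtain)
    have ff: "fin f" "fin g" "fin h" using f g h spanBas_fin by auto
    have XY: "coset_add X Y = coset NN (f + g)" using f g cosetN_add by simp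
    have YZ: "coset_add Y Z = coset NN (g + h)" using g h cosetN_add by simp
    show "pr (coset_add X Y) Z = coset_add (pr X Z) (pr Y Z)"
      using pr_wd[OF SS_add[OF X Y] Z XY h(2) fin_add[OF ff(1,2)] ff(3)]
        pr_wd[OF X Z f(2) h(2) ff(1,3)] pr_wd[OF Y Z g(2) h(2) ff(2,3)]
      by (simp add: cosetN_add P_add1 ff)
    show "pr X (coset_add Y Z) = coset_add (pr X Y) (pr X Z)"
      using pr_wd[OF X SS_add[OF Y Z] f(2) YZ ff(1) fin_add[OF ff(2,3)]]
        pr_wd[OF X Y f(2) g(2) ff(1,2)] pr_wd[OF X Z f(2) h(2) ff(1,3)]
      by (simp add: cosetN_add P_add2 ff)
  next
    fix s X Y assume X: "X \<in> SS" and Y: "Y \<in> SS"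
    obtain f where f: "f \<in> F.span Bas" "X = coset NN f" using X by (rule SS_obtain)
    obtain g where g: "g \<in> F.span Bas" "Y = coset NN g" using Y by (rule SS_obtain)
    have ff: "fin f" "fin g" using f g spanBas_fin by auto
    have sX: "coset_scale NN s X = coset NN (fscale s f)" using f cosetN_scale by simp
    have sY: "coset_scale NN s Y = coset NN (fscale s g)" using g cosetN_scale by simp
    show "pr (coset_scale NN s X) Y = coset_scale NN s (pr X Y)"
      using pr_wd[OF SS_scale[OF X] Y sX g(2) fin_scale[OF ff(1)] ff(2)] pr_wd[OF X Y f(2) g(2) ff]
      by (simp add: cosetN_scale P_scale1 ff)
    show "pr X (coset_scale NN s Y) = coset_scale NN s (pr X Y)"
      using pr_wd[OF X SS_scale[OF Y] f(2) sY ff(1) fin_scale[OF ff(2)]] pr_wd[OF X Y f(2) g(2) ff]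
      by (simp add: cosetN_scale P_scale2 ff)
  qed
next
  fix x x' :: "'a option" and y y' :: "'b option" assume a: "\<not> (x = None \<and> y = None)" "\<not> (x' = None \<and> y' = None)"
  show "pr (augT_tensor scA scB (aug_emb x) (aug_emb y)) (augT_tensor scA scB (aug_emb x') (aug_emb y'))
       = coset NN (ps (aug_emb x, aug_emb y) (aug_emb x', aug_emb y'))"
    using pr_wd[OF tensor_SS[OF a(1)] tensor_SS[OF a(2)]] unfolding augT_tensor_def
    by (simp add: P_delta)
qed

end





definition st3 :: "('a::ab_group_add \<Rightarrow> 'a \<Rightarrow> 'a) \<Rightarrow> ('a \<Rightarrow> 'a \<Rightarrow> 'a) \<Rightarrow> ('a \<Rightarrow> 'a \<Rightarrow> 'a) \<Rightarrow> 'a \<Rightarrow> 'a \<Rightarrow> 'a" where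
  "st3 pr dt su a b = pr a b + dt a b + su a b"

locale tri = vector_space sc
  for sc :: "'k::field \<Rightarrow> 'a::ab_group_add \<Rightarrow> 'a" +
  fixes pr dt su :: "'a \<Rightarrow> 'a \<Rightarrow> 'a"
  assumes tri: "tridendriform_on UNIV (+) sc pr dt su"
begin

abbreviation "st \<equiv> st3 pr dt su"

lemma bil_pr: "bilinear_on UNIV (+) sc pr" and bil_dt: "bilinear_on UNIV (+) sc dt" and bil_su: "bilinear_on UNIV (+) sc su"
  and axs: "tridend_axioms_on UNIV (+) pr dt su"
  using tri unfolding tridendriform_on_def by auto

lemma bilg_of: "bilinear_on UNIV (+) sc f \<Longrightarrow> bilg (+) sc f"
  unfolding bilinear_on_def bilg_def by auto

lemma bilg_pr: "bilg (+) sc pr" and bilg_dt: "bilg (+) sc dt" and bilg_su: "bilg (+) sc su"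
  using bil_pr bil_dt bil_su bilg_of by auto

lemma bilg_z1: "bilg (+) sc f \<Longrightarrow> f 0 c = 0"
proof -
  assume "bilg (+) sc f"
  then have "f (0 + 0) c = f 0 c + f 0 c" unfolding bilg_def by blast
  then show ?thesis by simp
qed
lemma bilg_z2: "bilg (+) sc f \<Longrightarrow> f c 0 = 0"
proof -
  assume "bilg (+) sc f"
  then have "f c (0 + 0) = f c 0 + f c 0" unfolding bilg_def by blast
  then show ?thesis by simp
qed

lemma bilg_st: "bilg (+) sc st"
  using bilg_pr bilg_dt bilg_su unfolding bilg_def st3_def by (simp add: algebra_simps scale_right_distrib)

lemma pr_add1: "pr (x + y) z = pr x z + pr y z" and pr_add2: "pr x (y + z) = pr x y + pr x z"
  using bilg_pr unfolding bilg_def by blast+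
lemma dt_add1: "dt (x + y) z = dt x z + dt y z" and dt_add2: "dt x (y + z) = dt x y + dt x z"
  using bilg_dt unfolding bilg_def by blast+
lemma su_add1: "su (x + y) z = su x z + su y z" and su_add2: "su x (y + z) = su x y + su x z"
  using bilg_su unfolding bilg_def by blast+

lemma zs[simp]: "pr 0 c = 0" "pr c 0 = 0" "dt 0 c = 0" "dt c 0 = 0" "su 0 c = 0" "su c 0 = 0" "st 0 c = 0" "st c 0 = 0"
  using bilg_z1 bilg_z2 bilg_pr bilg_dt bilg_su bilg_st by blast+

lemma ax[simp]:
  "pr (pr a b) c = pr a (st b c)"
  "pr (su a b) c = su a (pr b c)"
  "su (st a b) c = su a (su b c)"
  "dt (su a b) c = su a (dt b c)"
  "dt (pr a b) c = dt a (su b c)"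
  "pr (dt a b) c = dt a (pr b c)"
  "dt (dt a b) c = dt a (dt b c)"
  using axs unfolding tridend_axioms_on_def Let_def st3_def by auto

lemma st_assoc[simp]: "st (st a b) c = st a (st b c)"
proof -
  have "st (st a b) c = pr (st a b) c + dt (st a b) c + su (st a b) c" by (simp add: st3_def)
  also have "pr (st a b) c = pr a (st b c) + dt a (pr b c) + su a (pr b c)"
    by (simp only: st3_def pr_add1) (simp add: st3_def)
  also have "dt (st a b) c = dt a (su b c) + dt a (dt b c) + su a (dt b c)"
    by (simp only: st3_def dt_add1) (simp add: st3_def)
  also have "su (st a b) c = su a (su b c)" by simp
  finally show ?thesis by (simp add: st3_def pr_add2 dt_add2 su_add2 algebra_simps)
qed

end

definition ostar :: "('a \<Rightarrow> 'a \<Rightarrow> 'a) \<Rightarrow> 'a option \<Rightarrow> 'a option \<Rightarrow> 'a option" where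
  "ostar f x x' = (case x of None \<Rightarrow> x' | Some a \<Rightarrow> (case x' of None \<Rightarrow> Some a | Some c \<Rightarrow> Some (f a c)))"

definition vprec :: "('b::ab_group_add \<Rightarrow> 'b \<Rightarrow> 'b) \<Rightarrow> 'b option \<Rightarrow> 'b option \<Rightarrow> 'b" where
  "vprec f y y' = (case y of None \<Rightarrow> 0 | Some a \<Rightarrow> (case y' of None \<Rightarrow> a | Some c \<Rightarrow> f a c))"
definition vdot :: "('b::ab_group_add \<Rightarrow> 'b \<Rightarrow> 'b) \<Rightarrow> 'b option \<Rightarrow> 'b option \<Rightarrow> 'b" where
  "vdot f y y' = (case y of None \<Rightarrow> 0 | Some a \<Rightarrow> (case y' of None \<Rightarrow> 0 | Some c \<Rightarrow> f a c))"
definition vsucc :: "('b::ab_group_add \<Rightarrow> 'b \<Rightarrow> 'b) \<Rightarrow> 'b option \<Rightarrow> 'b option \<Rightarrow> 'b" where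
  "vsucc f y y' = (case y of None \<Rightarrow> (case y' of None \<Rightarrow> 0 | Some c \<Rightarrow> c) | Some a \<Rightarrow> (case y' of None \<Rightarrow> 0 | Some c \<Rightarrow> f a c))"
definition vstar :: "('b::ab_group_add \<Rightarrow> 'b \<Rightarrow> 'b) \<Rightarrow> 'b option \<Rightarrow> 'b option \<Rightarrow> 'b" where
  "vstar f y y' = (case y of None \<Rightarrow> (case y' of None \<Rightarrow> 0 | Some c \<Rightarrow> c) | Some a \<Rightarrow> (case y' of None \<Rightarrow> a | Some c \<Rightarrow> f a c))"

definition mm :: "('a \<Rightarrow> 'a \<Rightarrow> 'a) \<Rightarrow> ('a \<Rightarrow> 'a \<Rightarrow> 'a) \<Rightarrow> ('b option \<Rightarrow> 'b option \<Rightarrow> 'b) \<Rightarrow>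
   'a option \<times> 'b option \<Rightarrow> 'a option \<times> 'b option \<Rightarrow> 'a option \<times> 'b option" where
  "mm stA opA vB X Y = (if snd X = None \<and> snd Y = None then (Some (opA (the (fst X)) (the (fst Y))), None)
      else (ostar stA (fst X) (fst Y), Some (vB (snd X) (snd Y))))"

definition nrm :: "'a::zero option \<times> 'b::zero option \<Rightarrow> 'a option \<times> 'b option" where
  "nrm X = (if fst X = Some 0 \<or> snd X = Some 0 then (Some 0, Some 0) else X)"

definition nn :: "'a option \<times> 'b option \<Rightarrow> bool" where "nn X \<longleftrightarrow> \<not> (fst X = None \<and> snd X = None)"

locale ttri = A: tri scA precA dotA succA + B: tri scB precB dotB succB
  for scA :: "'k::field \<Rightarrow> 'a::ab_group_add \<Rightarrow> 'a" and precA dotA succA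
  and scB :: "'k \<Rightarrow> 'b::ab_group_add \<Rightarrow> 'b" and precB dotB succB
begin

abbreviation "mp \<equiv> mm A.st precA (vprec precB)"
abbreviation "md \<equiv> mm A.st dotA (vdot dotB)"
abbreviation "ms \<equiv> mm A.st succA (vsucc succB)"
abbreviation "mst \<equiv> mm A.st A.st (vstar B.st)"

lemmas csimps = mm_def nrm_def nn_def ostar_def vprec_def vdot_def vsucc_def vstar_def

lemma comp1: "nn X \<Longrightarrow> nn Y \<Longrightarrow> nn Z \<Longrightarrow> nrm (mp (mp X Y) Z) = nrm (mp X (mst Y Z))"
  by (cases X; cases Y; cases Z) (auto simp: csimps split: option.splits)


lemma comp2: "nn X \<Longrightarrow> nn Y \<Longrightarrow> nn Z \<Longrightarrow> nrm (mp (ms X Y) Z) = nrm (ms X (mp Y Z))"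
  by (cases X; cases Y; cases Z) (auto simp: csimps split: option.splits)
lemma comp3: "nn X \<Longrightarrow> nn Y \<Longrightarrow> nn Z \<Longrightarrow> nrm (ms (mst X Y) Z) = nrm (ms X (ms Y Z))"
  by (cases X; cases Y; cases Z) (auto simp: csimps split: option.splits)
lemma comp4: "nn X \<Longrightarrow> nn Y \<Longrightarrow> nn Z \<Longrightarrow> nrm (md (ms X Y) Z) = nrm (ms X (md Y Z))"
  by (cases X; cases Y; cases Z) (auto simp: csimps split: option.splits)
lemma comp5: "nn X \<Longrightarrow> nn Y \<Longrightarrow> nn Z \<Longrightarrow> nrm (md (mp X Y) Z) = nrm (md X (ms Y Z))"
  by (cases X; cases Y; cases Z) (auto simp: csimps split: option.splits)
lemma comp6: "nn X \<Longrightarrow> nn Y \<Longrightarrow> nn Z \<Longrightarrow> nrm (mp (md X Y) Z) = nrm (md X (mp Y Z))"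
  by (cases X; cases Y; cases Z) (auto simp: csimps split: option.splits)
lemma comp7: "nn X \<Longrightarrow> nn Y \<Longrightarrow> nn Z \<Longrightarrow> nrm (md (md X Y) Z) = nrm (md X (md Y Z))"
  by (cases X; cases Y; cases Z) (auto simp: csimps split: option.splits)

end




context tctx
begin

abbreviation "BB \<equiv> {augT_tensor scA scB (aug_emb x) (aug_emb y) | x y. \<not> (x = None \<and> y = None)}"

lemma BB_SS: "B \<in> BB \<Longrightarrow> B \<in> SS" using tensor_SS by blast

lemma ext1:
  assumes a1: "\<And>X Y. X \<in> SS \<Longrightarrow> Y \<in> SS \<Longrightarrow> Ha (coset_add X Y) = coset_add (Ha X) (Ha Y)"
      and s1: "\<And>s X. X \<in> SS \<Longrightarrow> Ha (coset_scale NN s X) = coset_scale NN s (Ha X)"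
      and a2: "\<And>X Y. X \<in> SS \<Longrightarrow> Y \<in> SS \<Longrightarrow> Hb (coset_add X Y) = coset_add (Hb X) (Hb Y)"
      and s2: "\<And>s X. X \<in> SS \<Longrightarrow> Hb (coset_scale NN s X) = coset_scale NN s (Hb X)"
      and b: "\<And>B. B \<in> BB \<Longrightarrow> Ha B = Hb B"
      and X: "X \<in> SS"
  shows "Ha X = Hb X"
proof -
  have main: "f \<in> F.span Bas \<longrightarrow> Ha (coset NN f) = Hb (coset NN f)" if f: "f \<in> F.span Bas" for f
  proof (rule F.span_induct_alt[OF f, where h="\<lambda>f. f \<in> F.span Bas \<longrightarrow> Ha (coset NN f) = Hb (coset NN f)"])
    let ?b0 = "delta (aug_emb (None::'a option), aug_emb (Some (0::'b))) :: ('k \<times> 'a) \<times> ('k \<times> 'b) \<Rightarrow> 'k"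
    let ?B0 = "coset NN ?b0"
    have B0: "?B0 \<in> BB" unfolding augT_tensor_def by blast
    have B0S: "?B0 \<in> SS" using BB_SS[OF B0] .
    have "fscale (0::'k) ?b0 = 0" by (simp add: fun_eq_iff fscale_apply)
    then have "coset NN 0 = coset_scale NN 0 ?B0" by (simp add: cosetN_scale)
    then show "0 \<in> F.span Bas \<longrightarrow> Ha (coset NN 0) = Hb (coset NN 0)"
      using s1[OF B0S] s2[OF B0S] b[OF B0] by simp
  next
    fix c x y assume x: "x \<in> Bas" and IH: "y \<in> F.span Bas \<longrightarrow> Ha (coset NN y) = Hb (coset NN y)"
    show "fscale c x + y \<in> F.span Bas \<longrightarrow> Ha (coset NN (fscale c x + y)) = Hb (coset NN (fscale c x + y))"
    proof
      assume sp: "fscale c x + y \<in> F.span Bas"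
      have xs: "x \<in> F.span Bas" using x by (rule F.span_base)
      have "y = (fscale c x + y) - fscale c x" by simp
      then have ys: "y \<in> F.span Bas" using F.span_diff[OF sp F.span_scale[OF xs, where c=c]] by simp
      have xB: "coset NN x \<in> BB" using x unfolding augT_tensor_def by blast
      have xS: "coset NN x \<in> SS" using BB_SS[OF xB] .
      have yS: "coset NN y \<in> SS" using SS_I[OF ys] .
      have e: "coset NN (fscale c x + y) = coset_add (coset_scale NN c (coset NN x)) (coset NN y)"
        by (simp add: cosetN_add cosetN_scale)
      have cxS: "coset_scale NN c (coset NN x) \<in> SS" using SS_scale[OF xS] .
      show "Ha (coset NN (fscale c x + y)) = Hb (coset NN (fscale c x + y))"
        unfolding e a1[OF cxS yS] a2[OF cxS yS] s1[OF xS] s2[OF xS] b[OF xB] using IH ys by simp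
    qed
  qed
  obtain f where f: "f \<in> F.span Bas" "X = coset NN f" using X by (rule SS_obtain)
  show ?thesis using main[OF f(1)] f by simp
qed

lemma bl:
  assumes "bilinear_on SS coset_add (coset_scale NN) q"
  shows "\<And>X Y. X \<in> SS \<Longrightarrow> Y \<in> SS \<Longrightarrow> q X Y \<in> SS"
    and "\<And>X Y Z. X \<in> SS \<Longrightarrow> Y \<in> SS \<Longrightarrow> Z \<in> SS \<Longrightarrow> q (coset_add X Y) Z = coset_add (q X Z) (q Y Z)"
    and "\<And>X Y Z. X \<in> SS \<Longrightarrow> Y \<in> SS \<Longrightarrow> Z \<in> SS \<Longrightarrow> q X (coset_add Y Z) = coset_add (q X Y) (q X Z)"
    and "\<And>s X Y. X \<in> SS \<Longrightarrow> Y \<in> SS \<Longrightarrow> q (coset_scale NN s X) Y = coset_scale NN s (q X Y)"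
    and "\<And>s X Y. X \<in> SS \<Longrightarrow> Y \<in> SS \<Longrightarrow> q X (coset_scale NN s Y) = coset_scale NN s (q X Y)"
  using assms unfolding bilinear_on_def by blast+

lemma assoc_gen:
  assumes q: "bilinear_on SS coset_add (coset_scale NN) q" and r: "bilinear_on SS coset_add (coset_scale NN) r"
      and q': "bilinear_on SS coset_add (coset_scale NN) q'" and r': "bilinear_on SS coset_add (coset_scale NN) r'"
      and b: "\<And>B1 B2 B3. B1 \<in> BB \<Longrightarrow> B2 \<in> BB \<Longrightarrow> B3 \<in> BB \<Longrightarrow> q (r B1 B2) B3 = q' B1 (r' B2 B3)"
      and X: "X \<in> SS" and Y: "Y \<in> SS" and Z: "Z \<in> SS"
  shows "q (r X Y) Z = q' X (r' Y Z)"
proof -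
  note q = bl[OF q] and r = bl[OF r] and q' = bl[OF q'] and r' = bl[OF r']
  have s1: "q (r X B2) B3 = q' X (r' B2 B3)" if "B2 \<in> BB" "B3 \<in> BB" "X \<in> SS" for X B2 B3
  proof (rule ext1[where Ha="\<lambda>X. q (r X B2) B3" and Hb="\<lambda>X. q' X (r' B2 B3)"])
    have S: "B2 \<in> SS" "B3 \<in> SS" using that BB_SS by auto
    show "q (r (coset_add X Y) B2) B3 = coset_add (q (r X B2) B3) (q (r Y B2) B3)" if "X \<in> SS" "Y \<in> SS" for X Y
      using that S by (simp add: q r)
    show "q (r (coset_scale NN s X) B2) B3 = coset_scale NN s (q (r X B2) B3)" if "X \<in> SS" for s X
      using that S by (simp add: q r)
    show "q' (coset_add X Y) (r' B2 B3) = coset_add (q' X (r' B2 B3)) (q' Y (r' B2 B3))" if "X \<in> SS" "Y \<in> SS" for X Y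
      using that S by (simp add: q' r')
    show "q' (coset_scale NN s X) (r' B2 B3) = coset_scale NN s (q' X (r' B2 B3))" if "X \<in> SS" for s X
      using that S by (simp add: q' r')
  qed (use that b in auto)
  have s2: "q (r X Y) B3 = q' X (r' Y B3)" if "B3 \<in> BB" "X \<in> SS" "Y \<in> SS" for X Y B3
  proof (rule ext1[where Ha="\<lambda>Y. q (r X Y) B3" and Hb="\<lambda>Y. q' X (r' Y B3)"])
    have S: "B3 \<in> SS" using that BB_SS by auto
    show "q (r X (coset_add Y Z)) B3 = coset_add (q (r X Y) B3) (q (r X Z) B3)" if "Y \<in> SS" "Z \<in> SS" for Y Z
      using that S \<open>X \<in> SS\<close> by (simp add: q r)
    show "q (r X (coset_scale NN s Y)) B3 = coset_scale NN s (q (r X Y) B3)" if "Y \<in> SS" for s Y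
      using that S \<open>X \<in> SS\<close> by (simp add: q r)
    show "q' X (r' (coset_add Y Z) B3) = coset_add (q' X (r' Y B3)) (q' X (r' Z B3))" if "Y \<in> SS" "Z \<in> SS" for Y Z
      using that S \<open>X \<in> SS\<close> by (simp add: q' r')
    show "q' X (r' (coset_scale NN s Y) B3) = coset_scale NN s (q' X (r' Y B3))" if "Y \<in> SS" for s Y
      using that S \<open>X \<in> SS\<close> by (simp add: q' r')
  qed (use that s1 in auto)
  show ?thesis
  proof (rule ext1[where Ha="\<lambda>Z. q (r X Y) Z" and Hb="\<lambda>Z. q' X (r' Y Z)"])
    show "q (r X Y) (coset_add Z W) = coset_add (q (r X Y) Z) (q (r X Y) W)" if "Z \<in> SS" "W \<in> SS" for Z W
      using that X Y by (simp add: q r)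
    show "q (r X Y) (coset_scale NN s Z) = coset_scale NN s (q (r X Y) Z)" if "Z \<in> SS" for s Z
      using that X Y by (simp add: q r)
    show "q' X (r' Y (coset_add Z W)) = coset_add (q' X (r' Y Z)) (q' X (r' Y W))" if "Z \<in> SS" "W \<in> SS" for Z W
      using that X Y by (simp add: q' r')
    show "q' X (r' Y (coset_scale NN s Z)) = coset_scale NN s (q' X (r' Y Z))" if "Z \<in> SS" for s Z
      using that X Y by (simp add: q' r')
  qed (use X Y Z s2 in auto)
qed

lemma csc_add: assumes "X \<in> SS" "Y \<in> SS"
  shows "coset_scale NN c (coset_add X Y) = coset_add (coset_scale NN c X) (coset_scale NN c Y)"
proof -
  obtain f where f: "f \<in> F.span Bas" "X = coset NN f" using assms(1) by (rule SS_obtain)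
  obtain g where g: "g \<in> F.span Bas" "Y = coset NN g" using assms(2) by (rule SS_obtain)
  show ?thesis unfolding f(2) g(2) cosetN_add cosetN_scale by (simp add: F.scale_right_distrib)
qed

lemma star_bil:
  assumes p: "bilinear_on SS coset_add (coset_scale NN) p" and d: "bilinear_on SS coset_add (coset_scale NN) d"
      and s: "bilinear_on SS coset_add (coset_scale NN) s"
  shows "bilinear_on SS coset_add (coset_scale NN) (\<lambda>X Y. coset_add (coset_add (p X Y) (d X Y)) (s X Y))"
  using bl[OF p] bl[OF d] bl[OF s]
  unfolding bilinear_on_def
  by (auto simp: SS_add csc_add coset_add_assoc coset_add_lcomm)

lemma T_add1: "coset_add (augT_tensor scA scB u v) (augT_tensor scA scB u' v) = augT_tensor scA scB (aug_add u u') v"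
  unfolding augT_tensor_def cosetN_add
proof -
  have "delta (aug_add u u', v) - (delta (u, v) + delta (u', v)) \<in> NN" using rel1[of u u' v] by (simp add: algebra_simps)
  then show "coset NN (delta (u, v) + delta (u', v)) = coset NN (delta (aug_add u u', v))" using cosetN_eq by blast
qed

lemma T_add2: "coset_add (augT_tensor scA scB u v) (augT_tensor scA scB u v') = augT_tensor scA scB u (aug_add v v')"
  unfolding augT_tensor_def cosetN_add
proof -
  have "delta (u, aug_add v v') - (delta (u, v) + delta (u, v')) \<in> NN" using rel2[of u v v'] by (simp add: algebra_simps)
  then show "coset NN (delta (u, v) + delta (u, v')) = coset NN (delta (u, aug_add v v'))" using cosetN_eq by blast
qed

definition BT :: "'a option \<times> 'b option \<Rightarrow> (('k \<times> 'a) \<times> ('k \<times> 'b) \<Rightarrow> 'k) set" where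
  "BT X = augT_tensor scA scB (aug_emb (fst X)) (aug_emb (snd X))"

lemma BT_BB: "nn X \<Longrightarrow> BT X \<in> BB" unfolding BT_def nn_def by blast

lemma BB_BT: "B \<in> BB \<Longrightarrow> \<exists>X. nn X \<and> B = BT X" unfolding BT_def nn_def by fastforce

lemma BT_nrm: "BT (nrm X) = BT X"
proof (cases "fst X = Some 0 \<or> snd X = Some 0")
  case True
  have z: "coset NN (delta (u, v)) = coset NN 0" if "delta (u, v) \<in> NN" for u v
    using that cosetN_eq by simp
  have "BT X = coset NN 0"
    using True unfolding BT_def augT_tensor_def
    by (auto simp: aug_emb_def intro!: z delta_zero_left delta_zero_right)
  moreover have "BT (Some 0, Some 0) = coset NN 0"
    unfolding BT_def augT_tensor_def by (auto simp: aug_emb_def intro!: z delta_zero_left)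
  ultimately show ?thesis using True by (simp add: nrm_def)
qed (simp add: nrm_def)

end





definition mBp :: "('k::field \<Rightarrow> 'b::ab_group_add \<Rightarrow> 'b) \<Rightarrow> ('b \<Rightarrow> 'b \<Rightarrow> 'b) \<Rightarrow> 'k \<times> 'b \<Rightarrow> 'k \<times> 'b \<Rightarrow> 'k \<times> 'b" where
  "mBp sc f v v' = (0, sc (fst v') (snd v) + f (snd v) (snd v'))"
definition mBd :: "('k::field \<Rightarrow> 'b::ab_group_add \<Rightarrow> 'b) \<Rightarrow> ('b \<Rightarrow> 'b \<Rightarrow> 'b) \<Rightarrow> 'k \<times> 'b \<Rightarrow> 'k \<times> 'b \<Rightarrow> 'k \<times> 'b" where
  "mBd sc f v v' = (0, f (snd v) (snd v'))"
definition mBs :: "('k::field \<Rightarrow> 'b::ab_group_add \<Rightarrow> 'b) \<Rightarrow> ('b \<Rightarrow> 'b \<Rightarrow> 'b) \<Rightarrow> 'k \<times> 'b \<Rightarrow> 'k \<times> 'b \<Rightarrow> 'k \<times> 'b" where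
  "mBs sc f v v' = (0, sc (fst v) (snd v') + f (snd v) (snd v'))"

context pctx
begin

lemma op_ok:
  fixes AS :: "'a option \<Rightarrow> 'a option \<Rightarrow> 'k \<times> 'a" and AOP :: "'b option \<Rightarrow> 'b option \<Rightarrow> 'k \<times> 'b"
  assumes m11: "mB (1, 0) (1, 0) = (0, 0)"
    and mulAS: "\<And>x x'. mulA scA st (aug_emb x) (aug_emb x') = AS x x'"
    and memb: "\<And>y y'. \<not> (y = None \<and> y' = None) \<Longrightarrow> mB (aug_emb y) (aug_emb y') = AOP y y'"
    and ASemb: "\<And>x x'. \<exists>z. AS x x' = aug_emb z"
    and AOPemb: "\<And>y y'. \<not> (y = None \<and> y' = None) \<Longrightarrow> \<exists>w. AOP y y' = aug_emb (Some w)"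
  shows "\<exists>p. bilinear_on SS coset_add (coset_scale NN) p \<and>
    (\<forall>(x::'a option) (y::'b option) x' y'. \<not> (x = None \<and> y = None) \<longrightarrow> \<not> (x' = None \<and> y' = None) \<longrightarrow>
       p (augT_tensor scA scB (aug_emb x) (aug_emb y)) (augT_tensor scA scB (aug_emb x') (aug_emb y'))
       = (if y = None \<and> y' = None then augT_tensor scA scB (0, oA (the x) (the x')) (1, 0)
          else augT_tensor scA scB (AS x x') (AOP y y')))"
proof -
  define tg :: "'a option \<Rightarrow> 'b option \<Rightarrow> 'a option \<Rightarrow> 'b option \<Rightarrow> ('k \<times> 'a) \<times> ('k \<times> 'b) \<Rightarrow> 'k" where "tg x y x' y' = (if y = None \<and> y' = None then delta (((0::'k), oA (the x) (the x')), ((1::'k), (0::'b)))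
          else delta (AS x x', AOP y y'))" for x y x' y'
  have key: "ps (aug_emb x, aug_emb y) (aug_emb x', aug_emb y') - tg x y x' y' \<in> NN \<and> tg x y x' y' \<in> Bas"
    if a: "\<not> (x = None \<and> y = None)" "\<not> (x' = None \<and> y' = None)" for x y x' y'
  proof (cases "y = None \<and> y' = None")
    case True
    then obtain a a' where x: "x = Some a" "x' = Some a'" using a by auto
    have e1: "aug_emb (None::'b option) = ((1::'k), (0::'b))" by (simp add: aug_emb_def)
    have "ps (aug_emb x, aug_emb y) (aug_emb x', aug_emb y') - tg x y x' y'
        = delta (mulA scA st (aug_emb x) (aug_emb x'), (0, 0))"
      using True x m11 unfolding tg_def psi_def by (simp add: e1 F.scale_one aug_emb_def)
    moreover have tgeq: "tg x y x' y' = delta (aug_emb (Some (oA a a')), aug_emb (None::'b option))"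
      using True x unfolding tg_def by (simp add: aug_emb_def)
    moreover have "tg x y x' y' \<in> Bas"
      unfolding tgeq by (rule CollectI, rule exI[of _ "Some (oA a a')"], rule exI[of _ None]) simp
    ultimately show ?thesis using delta_zero_right[of "mulA scA st (aug_emb x) (aug_emb x')"] by simp
  next
    case False
    have z: "fst (aug_emb y) * fst (aug_emb y') = (0::'k)" using False by (auto simp: aug_emb_def)
    have z0: "fscale (0::'k) (f :: ('k \<times> 'a) \<times> ('k \<times> 'b) \<Rightarrow> 'k) = 0" for f by (simp add: fun_eq_iff fscale_apply)
    have "ps (aug_emb x, aug_emb y) (aug_emb x', aug_emb y') = delta (mulA scA st (aug_emb x) (aug_emb x'), mB (aug_emb y) (aug_emb y'))
       + fscale (fst (aug_emb y :: 'k \<times> 'b) * fst (aug_emb y' :: 'k \<times> 'b)) (delta ((0, oA (snd (aug_emb x :: 'k \<times> 'a)) (snd (aug_emb x' :: 'k \<times> 'a))), (1, 0)))"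
      unfolding psi_def by simp
    also have "\<dots> = tg x y x' y'" unfolding z z0 tg_def if_not_P[OF False] using False by (simp add: mulAS memb)
    finally have "ps (aug_emb x, aug_emb y) (aug_emb x', aug_emb y') = tg x y x' y'" .
    moreover obtain z where z1: "AS x x' = aug_emb z" using ASemb by blast
    moreover obtain w where w1: "AOP y y' = aug_emb (Some w)" using AOPemb False by blast
    moreover have tgeq: "tg x y x' y' = delta (aug_emb z, aug_emb (Some w))"
      unfolding tg_def if_not_P[OF False] z1 w1 by (rule refl)
    moreover have "tg x y x' y' \<in> Bas"
      unfolding tgeq by (rule CollectI, rule exI[of _ z], rule exI[of _ "Some w"]) simp
    ultimately show ?thesis by (simp add: NN_zero)
  qed
  have H: "\<exists>h\<in>F.span Bas. ps (aug_emb x, aug_emb y) (aug_emb x', aug_emb y') - h \<in> NN"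
    if "\<not> (x = None \<and> y = None)" "\<not> (x' = None \<and> y' = None)" for x y x' y'
  proof -
    have k: "ps (aug_emb x, aug_emb y) (aug_emb x', aug_emb y') - tg x y x' y' \<in> NN \<and> tg x y x' y' \<in> Bas"
      by (rule key[OF that])
    have s: "tg x y x' y' \<in> F.span Bas" using conjunct2[OF k] by (rule F.span_base)
    show ?thesis
      apply (rule bexI[where x="tg x y x' y'"])
       apply (rule conjunct1[OF k])
      apply (rule s)
      done
  qed
  obtain p where p': "bilinear_on SS coset_add (coset_scale NN) p \<and>
    (\<forall>(x::'a option) (y::'b option) x' y'. \<not> (x = None \<and> y = None) \<longrightarrow> \<not> (x' = None \<and> y' = None) \<longrightarrow>
       p (augT_tensor scA scB (aug_emb x) (aug_emb y)) (augT_tensor scA scB (aug_emb x') (aug_emb y'))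
       = coset NN (ps (aug_emb x, aug_emb y) (aug_emb x', aug_emb y')))"
    using exists_prod[OF H] ..
  note p = conjunct1[OF p'] conjunct2[OF p']
  show ?thesis
  proof (intro exI conjI allI impI)
    show "bilinear_on SS coset_add (coset_scale NN) p" by (rule p(1))
  next
    fix x x' :: "'a option" and y y' :: "'b option"
    assume a: "\<not> (x = None \<and> y = None)" "\<not> (x' = None \<and> y' = None)"
    have eq: "coset NN (ps (aug_emb x, aug_emb y) (aug_emb x', aug_emb y')) = coset NN (tg x y x' y')"
      using key[OF a] cosetN_eq by blast
    show "p (augT_tensor scA scB (aug_emb x) (aug_emb y)) (augT_tensor scA scB (aug_emb x') (aug_emb y'))
       = (if y = None \<and> y' = None then augT_tensor scA scB (0, oA (the x) (the x')) (1, 0)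
          else augT_tensor scA scB (AS x x') (AOP y y'))"
    proof (cases "y = None \<and> y' = None")
      case True then show ?thesis using eq p(2)[rule_format, OF a] unfolding tg_def augT_tensor_def if_P[OF True] by simp
    next
      case False then show ?thesis using eq p(2)[rule_format, OF a] unfolding tg_def augT_tensor_def if_not_P[OF False] by simp
    qed
  qed
qed

end


context tri
begin
lemma pr_sc1: "pr (sc s x) y = sc s (pr x y)" and pr_sc2: "pr x (sc s y) = sc s (pr x y)"
  using bilg_pr unfolding bilg_def by blast+
lemma dt_sc1: "dt (sc s x) y = sc s (dt x y)" and dt_sc2: "dt x (sc s y) = sc s (dt x y)"
  using bilg_dt unfolding bilg_def by blast+
lemma su_sc1: "su (sc s x) y = sc s (su x y)" and su_sc2: "su x (sc s y) = sc s (su x y)"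
  using bilg_su unfolding bilg_def by blast+

lemma bilg_mBp: "bilg aug_add (aug_scale sc) (mBp sc pr)"
  unfolding bilg_def mBp_def aug_add_def aug_scale_def
  by (simp add: pr_add1 pr_add2 pr_sc1 pr_sc2 scale_left_distrib scale_right_distrib algebra_simps)
lemma bilg_mBd: "bilg aug_add (aug_scale sc) (mBd sc dt)"
  unfolding bilg_def mBd_def aug_add_def aug_scale_def
  by (simp add: dt_add1 dt_add2 dt_sc1 dt_sc2 scale_left_distrib scale_right_distrib algebra_simps)
lemma bilg_mBs: "bilg aug_add (aug_scale sc) (mBs sc su)"
  unfolding bilg_def mBs_def aug_add_def aug_scale_def
  by (simp add: su_add1 su_add2 su_sc1 su_sc2 scale_left_distrib scale_right_distrib algebra_simps)

lemma m11: "mBp sc pr (1, 0) (1, 0) = (0, 0)" "mBd sc dt (1, 0) (1, 0) = (0, 0)" "mBs sc su (1, 0) (1, 0) = (0, 0)"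
  by (simp_all add: mBp_def mBd_def mBs_def)

lemma memb:
  assumes "\<not> (y = None \<and> y' = None)"
  shows "mBp sc pr (aug_emb y) (aug_emb y') = aug_prec pr y y'"
    and "mBd sc dt (aug_emb y) (aug_emb y') = aug_dot dt y y'"
    and "mBs sc su (aug_emb y) (aug_emb y') = aug_succ su y y'"
    and "aug_prec pr y y' = aug_emb (Some (vprec pr y y'))"
    and "aug_dot dt y y' = aug_emb (Some (vdot dt y y'))"
    and "aug_succ su y y' = aug_emb (Some (vsucc su y y'))"
  using assms by (cases y; cases y'; simp add: mBp_def mBd_def mBs_def aug_emb_def aug_prec_def aug_dot_def aug_succ_def
      vprec_def vdot_def vsucc_def)+

lemma vsum: "\<not> (y = None \<and> y' = None) \<Longrightarrow> vprec pr y y' + vdot dt y y' + vsucc su y y' = vstar st y y'"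
  by (cases y; cases y') (simp_all add: vprec_def vdot_def vsucc_def vstar_def st3_def)

end

sublocale ttri \<subseteq> tctx scA scB by unfold_locales

context ttri
begin

lemma aug_star_emb: "aug_star precA dotA succA x x' = aug_emb (ostar A.st x x')"
  by (cases x; cases x') (simp_all add: aug_star_def aug_emb_def ostar_def st3_def)

lemma mulA_emb: "mulA scA A.st (aug_emb x) (aug_emb x') = aug_star precA dotA succA x x'"
  unfolding aug_star_emb by (cases x; cases x') (simp_all add: mulA_def aug_emb_def ostar_def)

lemma emb_ex: "\<exists>z. aug_star precA dotA succA x x' = aug_emb z" using aug_star_emb by blast

lemma ex_prec: "\<exists>p. bilinear_on SS coset_add (coset_scale NN) p \<and> tensor_bar_rule scA scB precA dotA succA precA (aug_prec precB) p"
proof -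
  interpret Pp: pctx scA scB A.st precA "mBp scB precB"
    by unfold_locales (simp_all add: A.bilg_st A.bilg_pr B.bilg_mBp)
  show ?thesis unfolding tensor_bar_rule_def
    by (rule Pp.op_ok[OF B.m11(1) mulA_emb B.memb(1) emb_ex]) (assumption, rule exI, rule B.memb(4), assumption)
qed

lemma ex_dot: "\<exists>p. bilinear_on SS coset_add (coset_scale NN) p \<and> tensor_bar_rule scA scB precA dotA succA dotA (aug_dot dotB) p"
proof -
  interpret Pp: pctx scA scB A.st dotA "mBd scB dotB"
    by unfold_locales (simp_all add: A.bilg_st A.bilg_dt B.bilg_mBd)
  show ?thesis unfolding tensor_bar_rule_def
    by (rule Pp.op_ok[OF B.m11(2) mulA_emb B.memb(2) emb_ex]) (assumption, rule exI, rule B.memb(5), assumption)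
qed

lemma ex_succ: "\<exists>p. bilinear_on SS coset_add (coset_scale NN) p \<and> tensor_bar_rule scA scB precA dotA succA succA (aug_succ succB) p"
proof -
  interpret Pp: pctx scA scB A.st succA "mBs scB succB"
    by unfold_locales (simp_all add: A.bilg_st A.bilg_su B.bilg_mBs)
  show ?thesis unfolding tensor_bar_rule_def
    by (rule Pp.op_ok[OF B.m11(3) mulA_emb B.memb(3) emb_ex]) (assumption, rule exI, rule B.memb(6), assumption)
qed

end


context tctx
begin

lemma BT_add_fst: "coset_add (BT (Some a, y)) (BT (Some b, y)) = BT (Some (a + b), y)"
proof -
  have "aug_add (aug_emb (Some a)) (aug_emb (Some b)) = (aug_emb (Some (a + b)) :: 'k \<times> 'a)"
    by (simp add: aug_add_def aug_emb_def)
  then show ?thesis unfolding BT_def fst_conv snd_conv T_add1 by simp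
qed

lemma BT_add_snd: "coset_add (BT (x, Some a)) (BT (x, Some b)) = BT (x, Some (a + b))"
proof -
  have "aug_add (aug_emb (Some a)) (aug_emb (Some b)) = (aug_emb (Some (a + b)) :: 'k \<times> 'b)"
    by (simp add: aug_add_def aug_emb_def)
  then show ?thesis unfolding BT_def fst_conv snd_conv T_add2 by simp
qed

lemma nn_mm: "nn (mm a b c X Y)" by (simp add: nn_def mm_def)

lemma ax_basis:
  assumes q: "\<And>X Y. nn X \<Longrightarrow> nn Y \<Longrightarrow> q (BT X) (BT Y) = BT (mq X Y)"
      and r: "\<And>X Y. nn X \<Longrightarrow> nn Y \<Longrightarrow> r (BT X) (BT Y) = BT (mr X Y)"
      and q': "\<And>X Y. nn X \<Longrightarrow> nn Y \<Longrightarrow> q' (BT X) (BT Y) = BT (mq' X Y)"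
      and r': "\<And>X Y. nn X \<Longrightarrow> nn Y \<Longrightarrow> r' (BT X) (BT Y) = BT (mr' X Y)"
      and nr: "\<And>X Y. nn (mr X Y)" and nr': "\<And>X Y. nn (mr' X Y)"
      and c: "\<And>X Y Z. nn X \<Longrightarrow> nn Y \<Longrightarrow> nn Z \<Longrightarrow> nrm (mq (mr X Y) Z) = nrm (mq' X (mr' Y Z))"
      and B: "B1 \<in> BB" "B2 \<in> BB" "B3 \<in> BB"
  shows "q (r B1 B2) B3 = q' B1 (r' B2 B3)"
proof -
  obtain X where X: "nn X" "B1 = BT X" using BB_BT[OF B(1)] by blast
  obtain Y where Y: "nn Y" "B2 = BT Y" using BB_BT[OF B(2)] by blast
  obtain Z where Z: "nn Z" "B3 = BT Z" using BB_BT[OF B(3)] by blast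
  have "q (r B1 B2) B3 = BT (mq (mr X Y) Z)" unfolding X(2) Y(2) Z(2) r[OF X(1) Y(1)] q[OF nr Z(1)] ..
  also have "\<dots> = BT (nrm (mq (mr X Y) Z))" by (simp add: BT_nrm)
  also have "\<dots> = BT (nrm (mq' X (mr' Y Z)))" by (simp add: c X(1) Y(1) Z(1))
  also have "\<dots> = BT (mq' X (mr' Y Z))" by (simp add: BT_nrm)
  also have "\<dots> = q' B1 (r' B2 B3)" unfolding X(2) Y(2) Z(2) r'[OF Y(1) Z(1)] q'[OF X(1) nr'] ..
  finally show ?thesis .
qed

end

context ttri
begin

lemma rule_BT:
  assumes R: "tensor_bar_rule scA scB precA dotA succA opA augop p"
    and E: "\<And>y y'. \<not> (y = None \<and> y' = None) \<Longrightarrow> augop y y' = aug_emb (Some (vB y y'))"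
    and X: "nn X" and Y: "nn Y"
  shows "p (BT X) (BT Y) = BT (mm A.st opA vB X Y)"
proof -
  obtain x y where Xe: "X = (x, y)" by (cases X)
  obtain x' y' where Ye: "Y = (x', y')" by (cases Y)
  have a: "\<not> (x = None \<and> y = None)" "\<not> (x' = None \<and> y' = None)" using X Y Xe Ye by (auto simp: nn_def)
  have rr: "p (BT X) (BT Y) = (if y = None \<and> y' = None then augT_tensor scA scB (0, opA (the x) (the x')) (1, 0)
           else augT_tensor scA scB (aug_star precA dotA succA x x') (augop y y'))"
    using R a unfolding tensor_bar_rule_def BT_def Xe Ye fst_conv snd_conv by blast
  show ?thesis
  proof (cases "y = None \<and> y' = None")
    case True
    have e: "((0::'k), opA (the x) (the x')) = aug_emb (Some (opA (the x) (the x')))" "((1::'k), (0::'b)) = aug_emb None"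
      by (simp_all add: aug_emb_def)
    show ?thesis unfolding rr if_P[OF True] unfolding Xe Ye mm_def BT_def using True e by simp
  next
    case False
    have m: "mm A.st opA vB X Y = (ostar A.st x x', Some (vB y y'))"
      unfolding Xe Ye mm_def fst_conv snd_conv if_not_P[OF False] ..
    show ?thesis unfolding rr if_not_P[OF False] m unfolding BT_def fst_conv snd_conv
      by (simp add: aug_star_emb E[OF False])
  qed
qed

lemma star_BT:
  assumes Rp: "tensor_bar_rule scA scB precA dotA succA precA (aug_prec precB) p"
    and Rd: "tensor_bar_rule scA scB precA dotA succA dotA (aug_dot dotB) d"
    and Rs: "tensor_bar_rule scA scB precA dotA succA succA (aug_succ succB) s"
    and X: "nn X" and Y: "nn Y"
  shows "coset_add (coset_add (p (BT X) (BT Y)) (d (BT X) (BT Y))) (s (BT X) (BT Y)) = BT (mst X Y)"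
proof -
  have p: "p (BT X) (BT Y) = BT (mp X Y)" by (rule rule_BT[OF Rp B.memb(4) X Y])
  have d: "d (BT X) (BT Y) = BT (md X Y)" by (rule rule_BT[OF Rd B.memb(5) X Y])
  have s: "s (BT X) (BT Y) = BT (ms X Y)" by (rule rule_BT[OF Rs B.memb(6) X Y])
  obtain x y where Xe: "X = (x, y)" by (cases X)
  obtain x' y' where Ye: "Y = (x', y')" by (cases Y)
  show ?thesis
  proof (cases "y = None \<and> y' = None")
    case True
    show ?thesis unfolding p d s unfolding Xe Ye mm_def fst_conv snd_conv if_P[OF True]
      by (simp add: BT_add_fst st3_def)
  next
    case False
    show ?thesis unfolding p d s unfolding Xe Ye mm_def fst_conv snd_conv if_not_P[OF False]
      by (simp add: BT_add_snd B.vsum[OF False])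
  qed
qed

end

theorem mainTheorem3:
  fixes scA :: "'k::field \<Rightarrow> 'a::ab_group_add \<Rightarrow> 'a"
    and scB :: "'k \<Rightarrow> 'b::ab_group_add \<Rightarrow> 'b"
    and precA dotA succA :: "'a \<Rightarrow> 'a \<Rightarrow> 'a"
    and precB dotB succB :: "'b \<Rightarrow> 'b \<Rightarrow> 'b"
  assumes "vector_space scA" and "vector_space scB"
    and "tridendriform_on UNIV (+) scA precA dotA succA"
    and "tridendriform_on UNIV (+) scB precB dotB succB"
  shows
    "(\<exists>p d s.
        bilinear_on (tensor_bar scA scB) coset_add (coset_scale (augT_null scA scB)) p \<and>
        bilinear_on (tensor_bar scA scB) coset_add (coset_scale (augT_null scA scB)) d \<and>
        bilinear_on (tensor_bar scA scB) coset_add (coset_scale (augT_null scA scB)) s \<and>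
        tensor_bar_rule scA scB precA dotA succA precA (aug_prec precB) p \<and>
        tensor_bar_rule scA scB precA dotA succA dotA (aug_dot dotB) d \<and>
        tensor_bar_rule scA scB precA dotA succA succA (aug_succ succB) s)
   \<and> (\<forall>p d s.
        bilinear_on (tensor_bar scA scB) coset_add (coset_scale (augT_null scA scB)) p \<and>
        bilinear_on (tensor_bar scA scB) coset_add (coset_scale (augT_null scA scB)) d \<and>
        bilinear_on (tensor_bar scA scB) coset_add (coset_scale (augT_null scA scB)) s \<and>
        tensor_bar_rule scA scB precA dotA succA precA (aug_prec precB) p \<and>
        tensor_bar_rule scA scB precA dotA succA dotA (aug_dot dotB) d \<and>
        tensor_bar_rule scA scB precA dotA succA succA (aug_succ succB) s
        \<longrightarrow> tridendriform_on (tensor_bar scA scB) coset_add (coset_scale (augT_null scA scB)) p d s)"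
proof -
  interpret T: ttri scA precA dotA succA scB precB dotB succB
    unfolding ttri_def tri_def tri_axioms_def using assms by simp
  show ?thesis
  proof (intro conjI allI impI)
    obtain p where p: "bilinear_on T.SS coset_add (coset_scale T.NN) p \<and> tensor_bar_rule scA scB precA dotA succA precA (aug_prec precB) p"
      using T.ex_prec ..
    obtain d where d: "bilinear_on T.SS coset_add (coset_scale T.NN) d \<and> tensor_bar_rule scA scB precA dotA succA dotA (aug_dot dotB) d"
      using T.ex_dot ..
    obtain s where s: "bilinear_on T.SS coset_add (coset_scale T.NN) s \<and> tensor_bar_rule scA scB precA dotA succA succA (aug_succ succB) s"
      using T.ex_succ ..
    show "\<exists>p d s.
        bilinear_on (tensor_bar scA scB) coset_add (coset_scale (augT_null scA scB)) p \<and>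
        bilinear_on (tensor_bar scA scB) coset_add (coset_scale (augT_null scA scB)) d \<and>
        bilinear_on (tensor_bar scA scB) coset_add (coset_scale (augT_null scA scB)) s \<and>
        tensor_bar_rule scA scB precA dotA succA precA (aug_prec precB) p \<and>
        tensor_bar_rule scA scB precA dotA succA dotA (aug_dot dotB) d \<and>
        tensor_bar_rule scA scB precA dotA succA succA (aug_succ succB) s"
      using p d s by blast
  next
    fix p d s
    assume H: "bilinear_on (tensor_bar scA scB) coset_add (coset_scale (augT_null scA scB)) p \<and>
        bilinear_on (tensor_bar scA scB) coset_add (coset_scale (augT_null scA scB)) d \<and>
        bilinear_on (tensor_bar scA scB) coset_add (coset_scale (augT_null scA scB)) s \<and>
        tensor_bar_rule scA scB precA dotA succA precA (aug_prec precB) p \<and>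
        tensor_bar_rule scA scB precA dotA succA dotA (aug_dot dotB) d \<and>
        tensor_bar_rule scA scB precA dotA succA succA (aug_succ succB) s"
    have bp: "bilinear_on T.SS coset_add (coset_scale T.NN) p" using H by blast
    have bd: "bilinear_on T.SS coset_add (coset_scale T.NN) d" using H by blast
    have bs: "bilinear_on T.SS coset_add (coset_scale T.NN) s" using H by blast
    have Rp: "tensor_bar_rule scA scB precA dotA succA precA (aug_prec precB) p" using H by blast
    have Rd: "tensor_bar_rule scA scB precA dotA succA dotA (aug_dot dotB) d" using H by blast
    have Rs: "tensor_bar_rule scA scB precA dotA succA succA (aug_succ succB) s" using H by blast
    define st where "st = (\<lambda>X Y. coset_add (coset_add (p X Y) (d X Y)) (s X Y))"
    have bst: "bilinear_on T.SS coset_add (coset_scale T.NN) st"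
      unfolding st_def by (rule T.star_bil[OF bp bd bs])
    have qp: "\<And>X Y. nn X \<Longrightarrow> nn Y \<Longrightarrow> p (T.BT X) (T.BT Y) = T.BT (T.mp X Y)"
      by (rule T.rule_BT[OF Rp T.B.memb(4)])
    have qd: "\<And>X Y. nn X \<Longrightarrow> nn Y \<Longrightarrow> d (T.BT X) (T.BT Y) = T.BT (T.md X Y)"
      by (rule T.rule_BT[OF Rd T.B.memb(5)])
    have qs: "\<And>X Y. nn X \<Longrightarrow> nn Y \<Longrightarrow> s (T.BT X) (T.BT Y) = T.BT (T.ms X Y)"
      by (rule T.rule_BT[OF Rs T.B.memb(6)])
    have qst: "\<And>X Y. nn X \<Longrightarrow> nn Y \<Longrightarrow> st (T.BT X) (T.BT Y) = T.BT (T.mst X Y)"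
      unfolding st_def by (rule T.star_BT[OF Rp Rd Rs])
    have ax: "\<forall>a\<in>T.SS. \<forall>b\<in>T.SS. \<forall>c\<in>T.SS.
        p (p a b) c = p a (st b c) \<and>
        p (s a b) c = s a (p b c) \<and>
        s (st a b) c = s a (s b c) \<and>
        d (s a b) c = s a (d b c) \<and>
        d (p a b) c = d a (s b c) \<and>
        p (d a b) c = d a (p b c) \<and>
        d (d a b) c = d a (d b c)"
    proof (intro ballI conjI)
      fix a b c assume abc: "a \<in> T.SS" "b \<in> T.SS" "c \<in> T.SS"
      show "p (p a b) c = p a (st b c)"
        by (rule T.assoc_gen[where q=p and r=p and q'=p and r'=st, OF bp bp bp bst _ abc],
            rule T.ax_basis[where q=p and r=p and q'=p and r'=st and mq=T.mp and mr=T.mp and mq'=T.mp and mr'=T.mst, OF qp qp qp qst T.nn_mm T.nn_mm T.comp1]) assumption+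
      show "p (s a b) c = s a (p b c)"
        by (rule T.assoc_gen[where q=p and r=s and q'=s and r'=p, OF bp bs bs bp _ abc],
            rule T.ax_basis[where q=p and r=s and q'=s and r'=p and mq=T.mp and mr=T.ms and mq'=T.ms and mr'=T.mp, OF qp qs qs qp T.nn_mm T.nn_mm T.comp2]) assumption+
      show "s (st a b) c = s a (s b c)"
        by (rule T.assoc_gen[where q=s and r=st and q'=s and r'=s, OF bs bst bs bs _ abc],
            rule T.ax_basis[where q=s and r=st and q'=s and r'=s and mq=T.ms and mr=T.mst and mq'=T.ms and mr'=T.ms, OF qs qst qs qs T.nn_mm T.nn_mm T.comp3]) assumption+
      show "d (s a b) c = s a (d b c)"
        by (rule T.assoc_gen[where q=d and r=s and q'=s and r'=d, OF bd bs bs bd _ abc],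
            rule T.ax_basis[where q=d and r=s and q'=s and r'=d and mq=T.md and mr=T.ms and mq'=T.ms and mr'=T.md, OF qd qs qs qd T.nn_mm T.nn_mm T.comp4]) assumption+
      show "d (p a b) c = d a (s b c)"
        by (rule T.assoc_gen[where q=d and r=p and q'=d and r'=s, OF bd bp bd bs _ abc],
            rule T.ax_basis[where q=d and r=p and q'=d and r'=s and mq=T.md and mr=T.mp and mq'=T.md and mr'=T.ms, OF qd qp qd qs T.nn_mm T.nn_mm T.comp5]) assumption+
      show "p (d a b) c = d a (p b c)"
        by (rule T.assoc_gen[where q=p and r=d and q'=d and r'=p, OF bp bd bd bp _ abc],
            rule T.ax_basis[where q=p and r=d and q'=d and r'=p and mq=T.mp and mr=T.md and mq'=T.md and mr'=T.mp, OF qp qd qd qp T.nn_mm T.nn_mm T.comp6]) assumption+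
      show "d (d a b) c = d a (d b c)"
        by (rule T.assoc_gen[where q=d and r=d and q'=d and r'=d, OF bd bd bd bd _ abc],
            rule T.ax_basis[where q=d and r=d and q'=d and r'=d and mq=T.md and mr=T.md and mq'=T.md and mr'=T.md, OF qd qd qd qd T.nn_mm T.nn_mm T.comp7]) assumption+
    qed
    show "tridendriform_on (tensor_bar scA scB) coset_add (coset_scale (augT_null scA scB)) p d s"
      unfolding tridendriform_on_def tridend_axioms_on_def Let_def
      using bp bd bs ax unfolding st_def by blast
  qed
qed



end
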